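(* Let $n,m\ge 1$. The number of plane labelled bipartite trees with $n$ white vertices and $m$ black vertices equals $$\frac{\bigl((n+m-2)!\bigr)^2}{(n-1)!\,(m-1)!}.$$
   Context: A plane tree is a finite tree embedded in the oriented plane. Two such trees are identified if an orientation-preserving homeomorphism of the plane carries one onto the other; equivalently, a plane tree is a tree together with a cyclic order of the edges at each vertex. A bipartite tree is a tree whose vertices are colored black and white so that adjacent vertices have different colors. A plane labelled bipartite tree with $n$ white and $m$ black vertices is a plane bipartite tree in which the white vertices carry the distinct labels $v_1,\dots,v_n$ and the black vertices carry the distinct labels $u_1,\dots,u_m$ (each label used exactly once). Two such labelled trees are identified if an orientation-preserving homeomorphism of the plane maps one onto the other, preserving colors and labels. Such a tree has $n+m-1$ edges. *)

theory Defs
  imports Complex_Main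
begin

text \<open>White vertex v_(i+1) is represented by Inl i (i < n), black vertex u_(j+1) by Inr j (j < m).
  An (undirected, simple) bipartite graph is given by its edge set E, a subset of {..<n} x {..<m}.\<close>

definition bip_vertices :: "nat \<Rightarrow> nat \<Rightarrow> (nat + nat) set" where
  "bip_vertices n m = Inl ` {..<n} \<union> Inr ` {..<m}"

definition bip_adj :: "(nat \<times> nat) set \<Rightarrow> (nat + nat) rel" where
  "bip_adj E = {(Inl i, Inr j) | i j. (i, j) \<in> E} \<union> {(Inr j, Inl i) | i j. (i, j) \<in> E}"

definition is_bip_tree :: "nat \<Rightarrow> nat \<Rightarrow> (nat \<times> nat) set \<Rightarrow> bool" where
  "is_bip_tree n m E \<longleftrightarrow>
     E \<subseteq> {..<n} \<times> {..<m} \<and>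
     (\<forall>u\<in>bip_vertices n m. \<forall>v\<in>bip_vertices n m. (u, v) \<in> (bip_adj E)\<^sup>*) \<and>
     \<not> (\<exists>vs. length vs \<ge> 3 \<and> distinct vs \<and>
           (\<forall>k<length vs. (vs ! k, vs ! ((k + 1) mod length vs)) \<in> bip_adj E))"

text \<open>A cyclic order on a finite set S, encoded as its successor map: a permutation of S
  consisting of a single cycle (identity outside S).\<close>
definition cyclic_order_on :: "'a set \<Rightarrow> ('a \<Rightarrow> 'a) \<Rightarrow> bool" where
  "cyclic_order_on S \<sigma> \<longleftrightarrow>
     bij_betw \<sigma> S S \<and> (\<forall>x. x \<notin> S \<longrightarrow> \<sigma> x = x) \<and>
     (\<forall>x\<in>S. \<forall>y\<in>S. \<exists>k. (\<sigma> ^^ k) x = y)"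

text \<open>Plane labelled bipartite trees: a labelled bipartite tree together with a cyclic order of
  the edges at each vertex (edges at white vertex i are identified with the black neighbours j,
  and conversely).  Since all vertices are labelled, two such data give the same plane labelled tree
  iff they are equal.\<close>
definition plane_labelled_bip_trees ::
  "nat \<Rightarrow> nat \<Rightarrow> ((nat \<times> nat) set \<times> (nat \<Rightarrow> nat \<Rightarrow> nat) \<times> (nat \<Rightarrow> nat \<Rightarrow> nat)) set" where
  "plane_labelled_bip_trees n m =
     {(E, rw, rb). is_bip_tree n m E \<and>
        (\<forall>i<n. cyclic_order_on {j. (i, j) \<in> E} (rw i)) \<and> (\<forall>i. n \<le> i \<longrightarrow> rw i = id) \<and>
        (\<forall>j<m. cyclic_order_on {i. (i, j) \<in> E} (rb j)) \<and> (\<forall>j. m \<le> j \<longrightarrow> rb j = id)}"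

end

theory Submission
  imports Defs
begin


definition fgraph :: "('a \<Rightarrow> 'a) \<Rightarrow> 'a rel" where
  "fgraph f = {(z, f z) | z. True}"

lemma fgraph_iff[simp]: "(a, b) \<in> fgraph f \<longleftrightarrow> b = f a"
  by (auto simp: fgraph_def)

lemma funpow_reach: "(\<exists>k. (f ^^ k) x = y) \<longleftrightarrow> (x, y) \<in> (fgraph f)\<^sup>*"
proof
  assume "\<exists>k. (f ^^ k) x = y"
  then obtain k where "(f ^^ k) x = y" by blast
  moreover have "(x, (f ^^ k') x) \<in> (fgraph f)\<^sup>*" for k'
    by (induction k') (auto intro: rtrancl_into_rtrancl)
  ultimately show "(x, y) \<in> (fgraph f)\<^sup>*" by blast
next
  assume "(x, y) \<in> (fgraph f)\<^sup>*"
  then show "\<exists>k. (f ^^ k) x = y"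
  proof (induction rule: rtrancl_induct)
    case base
    then show ?case by (intro exI[of _ 0]) simp
  next
    case (step y z)
    then obtain k where "(f ^^ k) x = y" by blast
    then show ?case using step by (intro exI[of _ "Suc k"]) simp
  qed
qed

lemma cyclic_order_on_alt:
  "cyclic_order_on S \<sigma> \<longleftrightarrow> bij_betw \<sigma> S S \<and> (\<forall>x. x \<notin> S \<longrightarrow> \<sigma> x = x) \<and>
     (\<forall>x\<in>S. \<forall>y\<in>S. (x, y) \<in> (fgraph \<sigma>)\<^sup>*)"
  unfolding cyclic_order_on_def funpow_reach ..

definition ins :: "('a \<Rightarrow> 'a) \<Rightarrow> 'a \<Rightarrow> 'a \<Rightarrow> 'a \<Rightarrow> 'a" where
  "ins \<sigma> p x = \<sigma>(p := x, x := \<sigma> p)"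

definition rem :: "('a \<Rightarrow> 'a) \<Rightarrow> 'a \<Rightarrow> 'a \<Rightarrow> 'a" where
  "rem \<tau> x = (\<lambda>z. if z = x then x else if \<tau> z = x then \<tau> x else \<tau> z)"

lemma bij_from_inj:
  assumes "finite S" "\<sigma> ` S \<subseteq> S" "inj_on \<sigma> S"
  shows "bij_betw \<sigma> S S"
  using endo_inj_surj[OF assms] assms(3) by (simp add: bij_betw_def)

lemma ins_cyclic:
  assumes co: "cyclic_order_on S \<sigma>" and fin: "finite S" and x: "x \<notin> S" and p: "p \<in> S"
  shows "cyclic_order_on (insert x S) (ins \<sigma> p x)"
proof -
  have bij: "bij_betw \<sigma> S S" and out: "\<And>z. z \<notin> S \<Longrightarrow> \<sigma> z = z"
    and orb: "\<And>a b. a \<in> S \<Longrightarrow> b \<in> S \<Longrightarrow> (a, b) \<in> (fgraph \<sigma>)\<^sup>*"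
    using co unfolding cyclic_order_on_alt by auto
  have inS: "\<And>z. z \<in> S \<Longrightarrow> \<sigma> z \<in> S" using bij bij_betwE by blast
  have inj: "inj_on \<sigma> S" using bij bij_betw_def by blast
  have px: "p \<noteq> x" using p x by blast
  let ?t = "ins \<sigma> p x"
  have t_x: "?t x = \<sigma> p" and t_p: "?t p = x" and t_o: "\<And>z. z \<noteq> p \<Longrightarrow> z \<noteq> x \<Longrightarrow> ?t z = \<sigma> z"
    using px by (auto simp: ins_def)
  have img: "?t ` insert x S \<subseteq> insert x S"
  proof (rule image_subsetI)
    fix z assume z: "z \<in> insert x S"
    show "?t z \<in> insert x S"
    proof (cases "z = x")
      case True then show ?thesis using t_x inS[OF p] by simp
    next
      case False
      show ?thesis
      proof (cases "z = p")
        case True then show ?thesis using t_p by simp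
      next
        case zp: False
        have "z \<in> S" using z False by simp
        then show ?thesis using t_o[OF zp False] inS by simp
      qed
    qed
  qed
  have injt: "inj_on ?t (insert x S)"
  proof (rule inj_onI)
    fix a b assume a: "a \<in> insert x S" and b: "b \<in> insert x S" and e: "?t a = ?t b"
    have hx: "c = p" if c: "c \<in> insert x S" "?t c = x" for c
    proof (rule ccontr)
      assume cp: "c \<noteq> p"
      show False
      proof (cases "c = x")
        case True then show False using c t_x inS[OF p] x by simp
      next
        case False
        then have "c \<in> S" using c by simp
        then show False using c t_o[OF cp False] inS x by fastforce
      qed
    qed
    have hs: "c = x" if c: "c \<in> insert x S" "?t c = \<sigma> p" for c
    proof (rule ccontr)
      assume cx: "c \<noteq> x"
      show False
      proof (cases "c = p")
        case True then show False using c t_p inS[OF p] x by simp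
      next
        case False
        then have cS: "c \<in> S" using c cx by simp
        have "\<sigma> c = \<sigma> p" using c t_o[OF False cx] by simp
        then show False using inj_onD[OF inj _ cS p] False by blast
      qed
    qed
    show "a = b"
    proof (cases "a = x")
      case True
      then have "?t b = \<sigma> p" using e t_x by simp
      from hs[OF b this] True show ?thesis by simp
    next
      case ax: False
      show ?thesis
      proof (cases "a = p")
        case True
        then have "?t b = x" using e t_p by simp
        from hx[OF b this] True show ?thesis by simp
      next
        case ap: False
        show ?thesis
        proof (cases "b = x")
          case True
          then have "?t a = \<sigma> p" using e t_x by simp
          from hs[OF a this] True show ?thesis by simp
        next
          case bx: False
          show ?thesis
          proof (cases "b = p")
            case True
            then have "?t a = x" using e t_p by simp
            from hx[OF a this] True show ?thesis by simp
          next
            case False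
            have "\<sigma> a = \<sigma> b" using e t_o[OF ap ax] t_o[OF False bx] by simp
            moreover have "a \<in> S" "b \<in> S" using a b ax bx by auto
            ultimately show ?thesis using inj_onD[OF inj] by blast
          qed
        qed
      qed
    qed
  qed
  have orbt: "(a, b) \<in> (fgraph ?t)\<^sup>*" if a: "a \<in> insert x S" and b: "b \<in> insert x S" for a b
  proof -
    have key: "(a', b') \<in> (fgraph ?t)\<^sup>*" if a': "a' \<in> S" and b': "b' \<in> S" for a' b'
    proof -
      have "(a', b') \<in> (fgraph \<sigma>)\<^sup>*" using orb a' b' by blast
      then have "(a', b') \<in> (fgraph ?t)\<^sup>* \<and> b' \<in> S"
      proof (induction rule: rtrancl_induct)
        case base then show ?case using a' by simp
      next
        case (step y z)
        then have y: "y \<in> S" and yr: "(a', y) \<in> (fgraph ?t)\<^sup>*" and z: "z = \<sigma> y" by auto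
        show ?case
        proof (cases "y = p")
          case True
          have e1: "(y, x) \<in> fgraph ?t" using True t_p by simp
          have e2: "(x, z) \<in> fgraph ?t" using True t_x z by simp
          have r: "(a', z) \<in> (fgraph ?t)\<^sup>*"
            by (rule rtrancl_into_rtrancl[OF rtrancl_into_rtrancl[OF yr e1] e2])
          have "z \<in> S" using z inS[OF y] by simp
          then show ?thesis using r by (intro conjI)
        next
          case False
          have "y \<noteq> x" using y x by blast
          then have "(y, z) \<in> fgraph ?t" using False t_o z by simp
          then have r: "(a', z) \<in> (fgraph ?t)\<^sup>*" by (rule rtrancl_into_rtrancl[OF yr])
          have "z \<in> S" using z inS[OF y] by simp
          then show ?thesis using r by (intro conjI)
        qed
      qed
      then show ?thesis by blast
    qed
    have xS: "(x, \<sigma> p) \<in> (fgraph ?t)\<^sup>*" using t_x by (simp add: r_into_rtrancl)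
    have Sx: "(p, x) \<in> (fgraph ?t)\<^sup>*" using t_p by (simp add: r_into_rtrancl)
    show ?thesis
    proof (cases "a = x")
      case True
      then show ?thesis
      proof (cases "b = x")
        case False
        then have "b \<in> S" using b by blast
        then show ?thesis using True rtrancl_trans[OF xS key[OF inS[OF p]]] by simp
      qed simp
    next
      case False
      then have aS: "a \<in> S" using a by blast
      show ?thesis
      proof (cases "b = x")
        case True
        then show ?thesis using rtrancl_trans[OF key[OF aS p] Sx] by simp
      next
        case False
        then show ?thesis using key[OF aS] b by blast
      qed
    qed
  qed
  have outt: "?t z = z" if z: "z \<notin> insert x S" for z
  proof -
    have "z \<noteq> p" "z \<noteq> x" "z \<notin> S" using p z by auto
    then show ?thesis using t_o out by simp
  qed
  show ?thesis unfolding cyclic_order_on_alt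
    using bij_from_inj[OF _ img injt] fin outt orbt by blast
qed

lemma rem_ins:
  assumes co: "cyclic_order_on S \<sigma>" and x: "x \<notin> S" and p: "p \<in> S"
  shows "rem (ins \<sigma> p x) x = \<sigma>"
proof
  fix z
  have bij: "bij_betw \<sigma> S S" and out: "\<And>z. z \<notin> S \<Longrightarrow> \<sigma> z = z"
    using co unfolding cyclic_order_on_alt by auto
  have inS: "\<And>z. z \<in> S \<Longrightarrow> \<sigma> z \<in> S" using bij bij_betwE by blast
  have px: "p \<noteq> x" using p x by blast
  show "rem (ins \<sigma> p x) x z = \<sigma> z"
  proof (cases "z = x")
    case True then show ?thesis using out x by (simp add: rem_def)
  next
    case False
    show ?thesis
    proof (cases "z = p")
      case True then show ?thesis using px by (simp add: rem_def ins_def)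
    next
      case False
      have "\<sigma> z \<noteq> x"
      proof (cases "z \<in> S")
        case True then show ?thesis using inS[OF True] x by blast
      next
        case False then show ?thesis using out[OF False] \<open>z \<noteq> x\<close> by simp
      qed
      then show ?thesis using \<open>z \<noteq> x\<close> False by (simp add: rem_def ins_def)
    qed
  qed
qed

lemma ins_pred_unique:
  assumes "ins \<sigma> p1 x = ins \<sigma> p2 x" and "\<sigma> ` S \<subseteq> S" "x \<notin> S" "p1 \<in> S"
  shows "p1 = p2"
proof (rule ccontr)
  assume ne: "p1 \<noteq> p2"
  have "p1 \<noteq> x" using assms by blast
  have "ins \<sigma> p1 x p1 = x" using \<open>p1 \<noteq> x\<close> by (simp add: ins_def)
  moreover have "ins \<sigma> p2 x p1 = \<sigma> p1" using ne \<open>p1 \<noteq> x\<close> by (simp add: ins_def)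
  ultimately have "\<sigma> p1 = x" using assms(1) by simp
  then show False using assms by blast
qed

lemma rem_cyclic:
  assumes co: "cyclic_order_on (insert x S) \<tau>" and fin: "finite S" and x: "x \<notin> S" and ne: "S \<noteq> {}"
  shows "\<exists>p\<in>S. \<tau> p = x \<and> cyclic_order_on S (rem \<tau> x) \<and> ins (rem \<tau> x) p x = \<tau>"
proof -
  have bij: "bij_betw \<tau> (insert x S) (insert x S)" and out: "\<And>z. z \<notin> insert x S \<Longrightarrow> \<tau> z = z"
    and orb: "\<And>a b. a \<in> insert x S \<Longrightarrow> b \<in> insert x S \<Longrightarrow> (a, b) \<in> (fgraph \<tau>)\<^sup>*"
    using co unfolding cyclic_order_on_alt by auto
  have inS: "\<And>z. z \<in> insert x S \<Longrightarrow> \<tau> z \<in> insert x S" using bij bij_betwE by blast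
  have inj: "inj_on \<tau> (insert x S)" using bij bij_betw_def by blast
  have txx: "\<tau> x \<noteq> x"
  proof
    assume h: "\<tau> x = x"
    obtain s where s: "s \<in> S" using ne by blast
    have "(x, s) \<in> (fgraph \<tau>)\<^sup>*" using s by (intro orb) auto
    then have "s = x"
    proof (induction rule: rtrancl_induct)
      case base then show ?case by (rule refl)
    next
      case (step y z)
      from step(2) have "z = \<tau> y" by simp
      with step(3) h show ?case by simp
    qed
    then show False using s x by blast
  qed
  have txS: "\<tau> x \<in> S" using inS txx by blast
  have "\<tau> ` insert x S = insert x S" using bij by (simp add: bij_betw_def)
  then have "x \<in> \<tau> ` insert x S" by simp
  then obtain p where p: "p \<in> insert x S" "\<tau> p = x" by (elim imageE) simp
  have pS: "p \<in> S" using p txx by auto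
  have predu: "z = p" if z: "\<tau> z = x" for z
  proof (cases "z \<in> insert x S")
    case True then show ?thesis using inj_onD[OF inj _ True p(1)] z p(2) by simp
  next
    case False then show ?thesis using out[OF False] z by simp
  qed
  let ?r = "rem \<tau> x"
  have r_p: "?r p = \<tau> x" using pS x p by (auto simp: rem_def)
  have r_o: "?r z = \<tau> z" if "z \<noteq> x" "z \<noteq> p" for z
  proof -
    have "\<tau> z \<noteq> x" using predu that(2) by blast
    then show ?thesis using that(1) by (simp add: rem_def)
  qed
  have img: "?r ` S \<subseteq> S"
  proof
    fix y assume "y \<in> ?r ` S"
    then obtain z where z: "z \<in> S" "y = ?r z" by blast
    show "y \<in> S"
    proof (cases "z = p")
      case True then show ?thesis using z r_p txS by simp
    next
      case False
      then have "\<tau> z \<noteq> x" using predu by blast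
      have zx: "z \<noteq> x" using z x by blast
      have r1: "?r z = \<tau> z" using r_o[OF zx False] .
      have "\<tau> z \<in> insert x S" using z(1) by (intro inS) simp
      then show ?thesis using r1 z(2) \<open>\<tau> z \<noteq> x\<close> by simp
    qed
  qed
  have injr: "inj_on ?r S"
  proof (rule inj_onI)
    fix a b assume a: "a \<in> S" and b: "b \<in> S" and e: "?r a = ?r b"
    have ax: "a \<noteq> x" "b \<noteq> x" using a b x by auto
    have hp: "c = p" if c: "c \<in> S" "?r c = \<tau> x" for c
    proof (rule ccontr)
      assume cp: "c \<noteq> p"
      have cx: "c \<noteq> x" using c x by blast
      have "\<tau> c = \<tau> x" using c r_o[OF cx cp] by simp
      then have "c = x" using inj_onD[OF inj] c(1) by blast
      then show False using cx by simp
    qed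
    show "a = b"
    proof (cases "a = p")
      case True
      then have "?r b = \<tau> x" using e r_p by simp
      from hp[OF b this] True show ?thesis by simp
    next
      case ap: False
      show ?thesis
      proof (cases "b = p")
        case True
        then have "?r a = \<tau> x" using e r_p by simp
        from hp[OF a this] True show ?thesis by simp
      next
        case False
        have "\<tau> a = \<tau> b" using e r_o[OF ax(1) ap] r_o[OF ax(2) False] by simp
        then show ?thesis using inj_onD[OF inj] a b by blast
      qed
    qed
  qed
  have outr: "\<And>z. z \<notin> S \<Longrightarrow> ?r z = z"
    using out p by (auto simp: rem_def)
  have orbr: "(a, b) \<in> (fgraph ?r)\<^sup>*" if a: "a \<in> S" and b: "b \<in> S" for a b
  proof -
    have "(a, b) \<in> (fgraph \<tau>)\<^sup>*" using orb a b by blast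
    then have "(if b = x then (a, p) else (a, b)) \<in> (fgraph ?r)\<^sup>*"
    proof (induction rule: rtrancl_induct)
      case base then show ?case using a x by auto
    next
      case (step y z)
      then have z: "z = \<tau> y" by simp
      show ?case
      proof (cases "y = x")
        case True
        then have "(a, p) \<in> (fgraph ?r)\<^sup>*" using step by simp
        moreover have "(p, z) \<in> fgraph ?r" using r_p z True by simp
        ultimately show ?thesis using z True txx by (auto intro: rtrancl_into_rtrancl)
      next
        case False
        then have ay: "(a, y) \<in> (fgraph ?r)\<^sup>*" using step by simp
        show ?thesis
        proof (cases "z = x")
          case True
          then have "y = p" using predu[of y] z by simp
          then show ?thesis using ay True by simp
        next
          case False
          have "y \<noteq> p" using False z p by auto
          then have "(y, z) \<in> fgraph ?r" using r_o \<open>y \<noteq> x\<close> z by simp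
          then show ?thesis using ay False by (auto intro: rtrancl_into_rtrancl)
        qed
      qed
    qed
    then show ?thesis using b x by (auto split: if_splits)
  qed
  have co': "cyclic_order_on S ?r" unfolding cyclic_order_on_alt
    using bij_from_inj[OF fin img injr] outr orbr by blast
  have insr: "ins ?r p x = \<tau>"
  proof
    fix z
    show "ins ?r p x z = \<tau> z"
    proof (cases "z = x")
      case True then show ?thesis using r_p by (simp add: ins_def)
    next
      case False
      show ?thesis
      proof (cases "z = p")
        case True then show ?thesis using p False by (simp add: ins_def)
      next
        case False
        then show ?thesis using \<open>z \<noteq> x\<close> r_o by (simp add: ins_def)
      qed
    qed
  qed
  show ?thesis using pS p co' insr by blast
qed

lemma cyclic_singleton: "cyclic_order_on {a} \<sigma> \<longleftrightarrow> \<sigma> = id"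
proof
  assume h: "cyclic_order_on {a} \<sigma>"
  then have "bij_betw \<sigma> {a} {a}" "\<forall>x. x \<notin> {a} \<longrightarrow> \<sigma> x = x" unfolding cyclic_order_on_def by auto
  then show "\<sigma> = id" by (auto simp: bij_betw_def fun_eq_iff)
next
  assume "\<sigma> = id"
  then show "cyclic_order_on {a} \<sigma>" unfolding cyclic_order_on_def
    by (auto intro: exI[of _ 0])
qed



definition VV :: "nat set \<Rightarrow> nat set \<Rightarrow> (nat + nat) set" where
  "VV W B = Inl ` W \<union> Inr ` B"

definition nocyc :: "(nat \<times> nat) set \<Rightarrow> bool" where
  "nocyc E \<longleftrightarrow> \<not> (\<exists>vs. length vs \<ge> 3 \<and> distinct vs \<and>
           (\<forall>k<length vs. (vs ! k, vs ! ((k + 1) mod length vs)) \<in> bip_adj E))"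

definition btree :: "nat set \<Rightarrow> nat set \<Rightarrow> (nat \<times> nat) set \<Rightarrow> bool" where
  "btree W B E \<longleftrightarrow> E \<subseteq> W \<times> B \<and>
     (\<forall>u\<in>VV W B. \<forall>v\<in>VV W B. (u, v) \<in> (bip_adj E)\<^sup>*) \<and> nocyc E"

definition NW :: "(nat \<times> nat) set \<Rightarrow> nat \<Rightarrow> nat set" where "NW E i = {j. (i, j) \<in> E}"
definition NB :: "(nat \<times> nat) set \<Rightarrow> nat \<Rightarrow> nat set" where "NB E j = {i. (i, j) \<in> E}"

lemma is_bip_tree_eq: "is_bip_tree n m E = btree {..<n} {..<m} E"
  unfolding is_bip_tree_def btree_def nocyc_def VV_def bip_vertices_def by simp

lemma adj_iff: "(a, b) \<in> bip_adj E \<longleftrightarrow>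
   (\<exists>i j. (i, j) \<in> E \<and> ((a = Inl i \<and> b = Inr j) \<or> (a = Inr j \<and> b = Inl i)))"
  unfolding bip_adj_def by blast

lemma adj_simps[simp]:
  "(Inl i, Inr j) \<in> bip_adj E \<longleftrightarrow> (i, j) \<in> E"
  "(Inr j, Inl i) \<in> bip_adj E \<longleftrightarrow> (i, j) \<in> E"
  "(Inl i, Inl i') \<notin> bip_adj E"
  "(Inr j, Inr j') \<notin> bip_adj E"
  unfolding adj_iff by auto

lemma adj_irrefl: "(a, a) \<notin> bip_adj E"
  unfolding adj_iff by auto

lemma adj_Inl_to: "(Inl i, v) \<in> bip_adj E \<Longrightarrow> \<exists>j. v = Inr j \<and> (i, j) \<in> E"
  unfolding adj_iff by auto
lemma adj_to_Inl: "(v, Inl i) \<in> bip_adj E \<Longrightarrow> \<exists>j. v = Inr j \<and> (i, j) \<in> E"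
  unfolding adj_iff by auto
lemma adj_Inr_to: "(Inr j, v) \<in> bip_adj E \<Longrightarrow> \<exists>i. v = Inl i \<and> (i, j) \<in> E"
  unfolding adj_iff by auto
lemma adj_to_Inr: "(v, Inr j) \<in> bip_adj E \<Longrightarrow> \<exists>i. v = Inl i \<and> (i, j) \<in> E"
  unfolding adj_iff by auto

lemma adj_sym: "(u, v) \<in> bip_adj E \<Longrightarrow> (v, u) \<in> bip_adj E"
  unfolding adj_iff by auto

lemma adj_mono: "E \<subseteq> E' \<Longrightarrow> bip_adj E \<subseteq> bip_adj E'"
  unfolding bip_adj_def by blast

lemma adj_conv: "converse (bip_adj E) = bip_adj E"
  using adj_sym by auto

lemma rtr_sym: "(u, v) \<in> (bip_adj E)\<^sup>* \<Longrightarrow> (v, u) \<in> (bip_adj E)\<^sup>*"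
  by (metis adj_conv rtrancl_converseI)

lemma adj_in_VV: "E \<subseteq> W \<times> B \<Longrightarrow> (u, v) \<in> bip_adj E \<Longrightarrow> u \<in> VV W B \<and> v \<in> VV W B"
  unfolding adj_iff VV_def by auto

lemma nocyc_mono: "nocyc E \<Longrightarrow> E' \<subseteq> E \<Longrightarrow> nocyc E'"
  unfolding nocyc_def using adj_mono by blast

lemma remove_leaf:
  assumes t: "btree W B E" and i: "i \<in> W" and N: "NW E i = {j}"
  shows "btree (W - {i}) B (E - {(i, j)})"
proof -
  let ?E = "E - {(i, j)}"
  have sub: "E \<subseteq> W \<times> B" and conn: "\<forall>u\<in>VV W B. \<forall>v\<in>VV W B. (u, v) \<in> (bip_adj E)\<^sup>*"
    and nc: "nocyc E" using t unfolding btree_def by auto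
  have ij: "(i, j) \<in> E" using N unfolding NW_def by auto
  have j: "j \<in> B" using ij sub by auto
  have Ni: "\<And>j'. (i, j') \<in> E \<Longrightarrow> j' = j" using N unfolding NW_def by auto
  have sub': "?E \<subseteq> (W - {i}) \<times> B" using sub Ni by auto
  have reach: "v = Inl i \<or> (Inr j, v) \<in> (bip_adj ?E)\<^sup>*" if "(Inr j, v) \<in> (bip_adj E)\<^sup>*" for v
    using that
  proof (induction rule: rtrancl_induct)
    case base then show ?case by simp
  next
    case (step y z)
    show ?case
    proof (cases "y = Inl i")
      case True
      then obtain j' where "z = Inr j'" "(i, j') \<in> E" using step(2) unfolding adj_iff by auto
      then show ?thesis using Ni by auto
    next
      case False
      then have yr: "(Inr j, y) \<in> (bip_adj ?E)\<^sup>*" using step by auto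
      show ?thesis
      proof (cases "(y, z) \<in> bip_adj ?E")
        case True then show ?thesis using yr by (meson rtrancl_into_rtrancl)
      next
        case False
        then have "(y = Inl i \<and> z = Inr j) \<or> (y = Inr j \<and> z = Inl i)"
          using step(2) unfolding adj_iff by auto
        then show ?thesis using \<open>y \<noteq> Inl i\<close> by auto
      qed
    qed
  qed
  have conn': "(u, v) \<in> (bip_adj ?E)\<^sup>*" if u: "u \<in> VV (W - {i}) B" and v: "v \<in> VV (W - {i}) B" for u v
  proof -
    have jV: "Inr j \<in> VV W B" using j unfolding VV_def by auto
    have uV: "u \<in> VV W B" "u \<noteq> Inl i" and vV: "v \<in> VV W B" "v \<noteq> Inl i"
      using u v unfolding VV_def by auto
    have "(Inr j, u) \<in> (bip_adj ?E)\<^sup>*" using reach conn jV uV by blast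
    moreover have "(Inr j, v) \<in> (bip_adj ?E)\<^sup>*" using reach conn jV vV by blast
    ultimately show ?thesis using rtr_sym rtrancl_trans by metis
  qed
  show ?thesis unfolding btree_def using sub' conn' nocyc_mono[OF nc] by blast
qed

lemma add_leaf:
  assumes t: "btree W B E" and i: "i \<notin> W" and j: "j \<in> B"
  shows "btree (insert i W) B (insert (i, j) E)"
proof -
  let ?E = "insert (i, j) E"
  have sub: "E \<subseteq> W \<times> B" and conn: "\<forall>u\<in>VV W B. \<forall>v\<in>VV W B. (u, v) \<in> (bip_adj E)\<^sup>*"
    and nc: "nocyc E" using t unfolding btree_def by auto
  have sub': "?E \<subseteq> insert i W \<times> B" using sub j by auto
  have mono: "(bip_adj E)\<^sup>* \<subseteq> (bip_adj ?E)\<^sup>*" using adj_mono[of E ?E] rtrancl_mono by blast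
  have ij: "(Inl i, Inr j) \<in> (bip_adj ?E)\<^sup>*" by (simp add: r_into_rtrancl)
  have jV: "Inr j \<in> VV W B" using j unfolding VV_def by auto
  have toj: "(Inl i, v) \<in> (bip_adj ?E)\<^sup>*" if "v \<in> VV (insert i W) B" for v
  proof (cases "v = Inl i")
    case False
    then have "v \<in> VV W B" using that unfolding VV_def by auto
    then have "(Inr j, v) \<in> (bip_adj ?E)\<^sup>*" using conn jV mono by blast
    then show ?thesis using ij rtrancl_trans by metis
  qed simp
  have conn': "(u, v) \<in> (bip_adj ?E)\<^sup>*" if u: "u \<in> VV (insert i W) B" and v: "v \<in> VV (insert i W) B" for u v
  proof (cases "u = Inl i")
    case True then show ?thesis using toj v by simp
  next
    case False
    then have uV: "u \<in> VV W B" using u unfolding VV_def by auto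
    show ?thesis
    proof (cases "v = Inl i")
      case True then show ?thesis using toj[OF u] rtr_sym by simp
    next
      case False
      then have "v \<in> VV W B" using v unfolding VV_def by auto
      then show ?thesis using conn uV mono by blast
    qed
  qed
  have Ni: "\<And>j'. (i, j') \<in> ?E \<Longrightarrow> j' = j" using sub i by auto
  have nc': "nocyc ?E"
    unfolding nocyc_def
  proof
    assume "\<exists>vs. 3 \<le> length vs \<and> distinct vs \<and> (\<forall>k<length vs. (vs ! k, vs ! ((k + 1) mod length vs)) \<in> bip_adj ?E)"
    then obtain vs where L: "3 \<le> length vs" and d: "distinct vs"
      and c: "\<forall>k<length vs. (vs ! k, vs ! ((k + 1) mod length vs)) \<in> bip_adj ?E" by blast
    let ?L = "length vs"
    show False
    proof (cases "Inl i \<in> set vs")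
      case False
      have "\<forall>k<?L. (vs ! k, vs ! ((k + 1) mod ?L)) \<in> bip_adj E"
      proof (intro allI impI)
        fix k assume k: "k < ?L"
        have L0: "0 < ?L" using L by linarith
        have k2: "(k + 1) mod ?L < ?L" using mod_less_divisor[OF L0] by blast
        have "vs ! k \<noteq> Inl i" "vs ! ((k + 1) mod ?L) \<noteq> Inl i"
          using False k k2 nth_mem by metis+
        then show "(vs ! k, vs ! ((k + 1) mod ?L)) \<in> bip_adj E"
          using c k unfolding adj_iff by auto
      qed
      then show False using nc L d unfolding nocyc_def by blast
    next
      case True
      then obtain a where a: "a < ?L" "vs ! a = Inl i" by (metis in_set_conv_nth)
      define b where "b = (if a = 0 then ?L - 1 else a - 1)"
      have b: "b < ?L" "(b + 1) mod ?L = a" using a L unfolding b_def by auto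
      have L0: "0 < ?L" using L by linarith
      have cc: "(a + 1) mod ?L < ?L" using mod_less_divisor[OF L0] by blast
      have "(vs ! b, vs ! ((b + 1) mod ?L)) \<in> bip_adj ?E" using c b(1) by blast
      then have "(vs ! b, Inl i) \<in> bip_adj ?E" using b(2) a(2) by simp
      then obtain j1 where j1: "vs ! b = Inr j1" "(i, j1) \<in> ?E" using adj_to_Inl by blast
      have vb: "vs ! b = Inr j" using j1 Ni[OF j1(2)] by simp
      have "(vs ! a, vs ! ((a + 1) mod ?L)) \<in> bip_adj ?E" using c a(1) by blast
      then have "(Inl i, vs ! ((a + 1) mod ?L)) \<in> bip_adj ?E" using a(2) by simp
      then obtain j2 where j2: "vs ! ((a + 1) mod ?L) = Inr j2" "(i, j2) \<in> ?E" using adj_Inl_to by blast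
      have va: "vs ! ((a + 1) mod ?L) = Inr j" using j2 Ni[OF j2(2)] by simp
      have "b \<noteq> (a + 1) mod ?L"
      proof (cases "a + 1 < ?L")
        case True
        then show ?thesis using L unfolding b_def by auto
      next
        case False
        then have a1: "a + 1 = ?L" using a by auto
        then have "(a + 1) mod ?L = 0" by simp
        moreover have "b = ?L - 2" using a1 L unfolding b_def by auto
        ultimately show ?thesis using L by simp
      qed
      moreover have "vs ! b = vs ! ((a + 1) mod ?L)" using vb va by simp
      ultimately show False using d b(1) cc nth_eq_iff_index_eq by blast
    qed
  qed
  show ?thesis unfolding btree_def using sub' conn' nc' by blast
qed

definition ispath :: "(nat \<times> nat) set \<Rightarrow> (nat + nat) list \<Rightarrow> bool" where
  "ispath E vs \<longleftrightarrow> distinct vs \<and> (\<forall>k. Suc k < length vs \<longrightarrow> (vs ! k, vs ! Suc k) \<in> bip_adj E)"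

lemma cycle_from_path:
  assumes p: "ispath E vs" and a: "a + 2 < length vs" and e: "(vs ! (length vs - 1), vs ! a) \<in> bip_adj E"
  shows "\<not> nocyc E"
proof -
  let ?c = "drop a vs"
  have len: "length ?c = length vs - a" by simp
  have "\<forall>k<length ?c. (?c ! k, ?c ! ((k + 1) mod length ?c)) \<in> bip_adj E"
  proof (intro allI impI)
    fix k assume k: "k < length ?c"
    show "(?c ! k, ?c ! ((k + 1) mod length ?c)) \<in> bip_adj E"
    proof (cases "Suc k < length ?c")
      case True
      then have "(k + 1) mod length ?c = Suc k" by simp
      then show ?thesis using p True a unfolding ispath_def by (simp add: add.commute)
    next
      case False
      then have kk: "k = length ?c - 1" using k by simp
      then have "k + 1 = length ?c" using k by linarith
      then have "(k + 1) mod length ?c = 0" by simp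
      moreover have "a + k = length vs - 1" using kk a by simp
      ultimately show ?thesis using e a by simp
    qed
  qed
  moreover have "distinct ?c" using p unfolding ispath_def by simp
  moreover have "3 \<le> length ?c" using a by simp
  ultimately show ?thesis unfolding nocyc_def by blast
qed

lemma has_neighbour:
  assumes "(a, b) \<in> (bip_adj E)\<^sup>*" "a \<noteq> b"
  shows "\<exists>c. (a, c) \<in> bip_adj E"
  using assms by (metis converse_rtranclE)

lemma leaf_exists:
  assumes t: "btree W B E" and fW: "finite W" and fB: "finite B"
    and u: "u \<in> VV W B" and w: "w \<in> VV W B" and uw: "u \<noteq> w"
  shows "(\<exists>i\<in>W. card (NW E i) = 1) \<or> (\<exists>j\<in>B. card (NB E j) = 1)"
proof -
  have sub: "E \<subseteq> W \<times> B" and conn: "\<forall>u\<in>VV W B. \<forall>v\<in>VV W B. (u, v) \<in> (bip_adj E)\<^sup>*"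
    and nc: "nocyc E" using t unfolding btree_def by auto
  define P where "P = {vs. ispath E vs \<and> set vs \<subseteq> VV W B}"
  have fV: "finite (VV W B)" using fW fB unfolding VV_def by simp
  have "P \<subseteq> {xs. set xs \<subseteq> VV W B \<and> length xs \<le> card (VV W B)}"
  proof
    fix xs assume "xs \<in> P"
    then have d: "distinct xs" and s: "set xs \<subseteq> VV W B" unfolding P_def ispath_def by auto
    have "card (set xs) \<le> card (VV W B)" by (rule card_mono[OF fV s])
    then have "length xs \<le> card (VV W B)" using distinct_card[OF d] by simp
    then show "xs \<in> {xs. set xs \<subseteq> VV W B \<and> length xs \<le> card (VV W B)}" using s by simp
  qed
  then have fP: "finite P" using finite_lists_length_le[OF fV] finite_subset by blast
  obtain c where c: "(u, c) \<in> bip_adj E" using has_neighbour conn u w uw by blast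
  have uc: "u \<noteq> c" using c adj_irrefl by blast
  have "\<forall>k. Suc k < length [u, c] \<longrightarrow> ([u, c] ! k, [u, c] ! Suc k) \<in> bip_adj E"
  proof (intro allI impI)
    fix k assume "Suc k < length [u, c]"
    then have "k = 0" by simp
    then show "([u, c] ! k, [u, c] ! Suc k) \<in> bip_adj E" using c by simp
  qed
  then have "[u, c] \<in> P" unfolding P_def ispath_def using uc adj_in_VV[OF sub c] u by simp
  then have neP: "P \<noteq> {}" by blast
  define M where "M = Max (length ` P)"
  have "M \<in> length ` P" unfolding M_def using fP neP by simp
  then obtain vs where vs: "vs \<in> P" "length vs = M" by blast
  have maxl: "\<And>xs. xs \<in> P \<Longrightarrow> length xs \<le> length vs" using vs fP unfolding M_def by simp
  have L2: "2 \<le> length vs" using maxl[OF \<open>[u, c] \<in> P\<close>] by simp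
  have pth: "ispath E vs" and sV: "set vs \<subseteq> VV W B" using vs unfolding P_def by auto
  let ?L = "length vs"
  let ?v = "vs ! (?L - 1)" and ?q = "vs ! (?L - 2)"
  have l1: "Suc (?L - 2) < ?L" "Suc (?L - 2) = ?L - 1" using L2 by arith+
  have "(vs ! (?L - 2), vs ! Suc (?L - 2)) \<in> bip_adj E" using pth l1(1) unfolding ispath_def by blast
  then have qv: "(?q, ?v) \<in> bip_adj E" using l1(2) by simp
  have only: "z = ?q" if z: "(?v, z) \<in> bip_adj E" for z
  proof (cases "z \<in> set vs")
    case False
    have "vs @ [z] \<in> P"
      unfolding P_def ispath_def
    proof (intro CollectI conjI allI impI)
      show "distinct (vs @ [z])" using False pth unfolding ispath_def by simp
      show "set (vs @ [z]) \<subseteq> VV W B" using sV adj_in_VV[OF sub z] by simp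
      fix k assume k: "Suc k < length (vs @ [z])"
      show "((vs @ [z]) ! k, (vs @ [z]) ! Suc k) \<in> bip_adj E"
      proof (cases "Suc k < ?L")
        case True then show ?thesis using pth unfolding ispath_def by (simp add: nth_append)
      next
        case False
        then have sk: "Suc k = ?L" and kl: "k < ?L" using k by simp_all
        have "(vs @ [z]) ! k = vs ! k" using kl by (simp add: nth_append)
        moreover have "k = ?L - 1" using sk by simp
        ultimately have "(vs @ [z]) ! k = vs ! (?L - 1)" by simp
        moreover have "(vs @ [z]) ! Suc k = z" using sk by simp
        ultimately show ?thesis using z by simp
      qed
    qed
    from maxl[OF this] show ?thesis by simp
  next
    case True
    then obtain a where a: "a < ?L" "vs ! a = z" by (metis in_set_conv_nth)
    show ?thesis
    proof (cases "a + 2 < ?L")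
      case True
      have "(vs ! (?L - 1), vs ! a) \<in> bip_adj E" using z a by simp
      from cycle_from_path[OF pth True this] nc show ?thesis by blast
    next
      case False
      show ?thesis
      proof (cases "a = ?L - 1")
        case True
        then have "(?v, ?v) \<in> bip_adj E" using z a by simp
        then show ?thesis using adj_irrefl by blast
      next
        case False
        then have "a = ?L - 2" using \<open>\<not> a + 2 < ?L\<close> a by simp
        then show ?thesis using a by simp
      qed
    qed
  qed
  have vV: "?v \<in> VV W B" using sV L2 by (simp add: subset_iff)
  show ?thesis
  proof (cases ?v)
    case (Inl i)
    then obtain j where qj: "?q = Inr j" "(i, j) \<in> E" using qv unfolding adj_iff by auto
    have "NW E i = {j}"
    proof
      show "NW E i \<subseteq> {j}"
      proof
        fix j' assume "j' \<in> NW E i"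
        then have "(?v, Inr j') \<in> bip_adj E" using Inl unfolding NW_def by simp
        from only[OF this] show "j' \<in> {j}" using qj by simp
      qed
      show "{j} \<subseteq> NW E i" using qj unfolding NW_def by auto
    qed
    then have "card (NW E i) = 1" by simp
    moreover have "i \<in> W" using vV Inl unfolding VV_def by auto
    ultimately show ?thesis by blast
  next
    case (Inr j)
    then obtain i where qi: "?q = Inl i" "(i, j) \<in> E" using qv unfolding adj_iff by auto
    have "NB E j = {i}"
    proof
      show "NB E j \<subseteq> {i}"
      proof
        fix i' assume "i' \<in> NB E j"
        then have "(?v, Inl i') \<in> bip_adj E" using Inr unfolding NB_def by simp
        from only[OF this] show "i' \<in> {i}" using qi by simp
      qed
      show "{i} \<subseteq> NB E j" using qi unfolding NB_def by auto
    qed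
    then have "card (NB E j) = 1" by simp
    moreover have "j \<in> B" using vV Inr unfolding VV_def by auto
    ultimately show ?thesis by blast
  qed
qed

lemma deg_pos:
  assumes t: "btree W B E" and u: "u \<in> VV W B" and w: "w \<in> VV W B" and uw: "u \<noteq> w"
  shows "\<forall>i\<in>W. NW E i \<noteq> {}" "\<forall>j\<in>B. NB E j \<noteq> {}"
proof -
  have conn: "\<forall>u\<in>VV W B. \<forall>v\<in>VV W B. (u, v) \<in> (bip_adj E)\<^sup>*" using t unfolding btree_def by auto
  have nb: "\<exists>c. (x, c) \<in> bip_adj E" if x: "x \<in> VV W B" for x
  proof -
    obtain y where "y \<in> VV W B" "y \<noteq> x" using u w uw by metis
    then show ?thesis using has_neighbour conn x by metis
  qed
  show "\<forall>i\<in>W. NW E i \<noteq> {}"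
  proof
    fix i assume "i \<in> W"
    then obtain c where "(Inl i, c) \<in> bip_adj E" using nb unfolding VV_def by blast
    then show "NW E i \<noteq> {}" unfolding adj_iff NW_def by auto
  qed
  show "\<forall>j\<in>B. NB E j \<noteq> {}"
  proof
    fix j assume "j \<in> B"
    then obtain c where "(Inr j, c) \<in> bip_adj E" using nb unfolding VV_def by blast
    then show "NB E j \<noteq> {}" unfolding adj_iff NB_def by auto
  qed
qed



definition PT :: "nat set \<Rightarrow> nat set \<Rightarrow> ((nat \<times> nat) set \<times> (nat \<Rightarrow> nat \<Rightarrow> nat) \<times> (nat \<Rightarrow> nat \<Rightarrow> nat)) set" where
  "PT W B = {(E, rw, rb). btree W B E \<and>
        (\<forall>i\<in>W. cyclic_order_on (NW E i) (rw i)) \<and> (\<forall>i. i \<notin> W \<longrightarrow> rw i = id) \<and>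
        (\<forall>j\<in>B. cyclic_order_on (NB E j) (rb j)) \<and> (\<forall>j. j \<notin> B \<longrightarrow> rb j = id)}"

lemma PT_eq: "plane_labelled_bip_trees n m = PT {..<n} {..<m}"
  unfolding plane_labelled_bip_trees_def PT_def is_bip_tree_eq NW_def NB_def Ball_def lessThan_iff
  by (simp add: not_less)

lemma PT_mem: "(E, rw, rb) \<in> PT W B \<longleftrightarrow> btree W B E \<and>
        (\<forall>i\<in>W. cyclic_order_on (NW E i) (rw i)) \<and> (\<forall>i. i \<notin> W \<longrightarrow> rw i = id) \<and>
        (\<forall>j\<in>B. cyclic_order_on (NB E j) (rb j)) \<and> (\<forall>j. j \<notin> B \<longrightarrow> rb j = id)"
  by (simp add: PT_def)

definition Fib :: "nat set \<Rightarrow> nat set \<Rightarrow> (nat \<Rightarrow> nat) \<Rightarrow> (nat \<Rightarrow> nat) \<Rightarrow> ((nat \<times> nat) set \<times> (nat \<Rightarrow> nat \<Rightarrow> nat) \<times> (nat \<Rightarrow> nat \<Rightarrow> nat)) set" where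
  "Fib W B d e = {T \<in> PT W B. (\<forall>i\<in>W. card (NW (fst T) i) = d i) \<and> (\<forall>j\<in>B. card (NB (fst T) j) = e j)}"

lemma Fib_mem: "(E, rw, rb) \<in> Fib W B d e \<longleftrightarrow> (E, rw, rb) \<in> PT W B \<and>
    (\<forall>i\<in>W. card (NW E i) = d i) \<and> (\<forall>j\<in>B. card (NB E j) = e j)"
  by (simp add: Fib_def)

definition val :: "nat set \<Rightarrow> nat set \<Rightarrow> (nat \<Rightarrow> nat) \<Rightarrow> (nat \<Rightarrow> nat) \<Rightarrow> bool" where
  "val W B d e \<longleftrightarrow> (\<forall>i\<in>W. 1 \<le> d i) \<and> (\<forall>j\<in>B. 1 \<le> e j) \<and>
     sum d W = card W + card B - 1 \<and> sum e B = card W + card B - 1"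

definition cnt :: "nat set \<Rightarrow> nat set \<Rightarrow> (nat \<Rightarrow> nat) \<Rightarrow> (nat \<Rightarrow> nat) \<Rightarrow> nat" where
  "cnt W B d e = (if val W B d e then fact (card W - 1) * fact (card B - 1) else 0)"

lemma val_swap: "val B W e d = val W B d e"
  unfolding val_def by (auto simp: add.commute)

lemma cnt_swap: "cnt B W e d = cnt W B d e"
proof -
  have v: "val B W e d = val W B d e" by (rule val_swap)
  show ?thesis unfolding cnt_def v
    by (simp only: mult.commute[of "fact (card B - 1)" "fact (card W - 1)"])
qed

lemma finite_funs:
  assumes "finite A" "finite Y"
  shows "finite {f. (\<forall>x. x \<notin> A \<longrightarrow> f x = c x) \<and> (\<forall>x\<in>A. f x \<in> Y)}"
  using assms(1)
proof (induction A rule: finite_induct)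
  case empty
  have "{f. (\<forall>x. x \<notin> {} \<longrightarrow> f x = c x) \<and> (\<forall>x\<in>{}. f x \<in> Y)} \<subseteq> {c}" by auto
  then show ?case by (rule finite_subset) simp
next
  case (insert a A)
  let ?S = "{f. (\<forall>x. x \<notin> A \<longrightarrow> f x = c x) \<and> (\<forall>x\<in>A. f x \<in> Y)}"
  let ?S' = "{f. (\<forall>x. x \<notin> insert a A \<longrightarrow> f x = c x) \<and> (\<forall>x\<in>insert a A. f x \<in> Y)}"
  have "?S' \<subseteq> (\<lambda>(y, g). g(a := y)) ` (Y \<times> ?S)"
  proof
    fix f assume f: "f \<in> ?S'"
    have "f a \<in> Y" using f by auto
    moreover have "f (a := c a) \<in> ?S" using f insert.hyps(2) by auto
    ultimately have mem: "(f a, f (a := c a)) \<in> Y \<times> ?S" by (rule SigmaI)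
    have eq: "f = (\<lambda>(y, g). g(a := y)) (f a, f (a := c a))" by simp
    show "f \<in> (\<lambda>(y, g). g(a := y)) ` (Y \<times> ?S)"
      by (rule image_eqI[where f = "\<lambda>(y, g). g(a := y)" and x = "(f a, f (a := c a))", OF eq mem])
  qed
  moreover have "finite ((\<lambda>(y, g). g(a := y)) ` (Y \<times> ?S))"
    using insert.IH assms(2) by simp
  ultimately show ?case by (rule finite_subset)
qed

lemma co_perm:
  assumes co: "cyclic_order_on S \<sigma>" and sub: "S \<subseteq> X"
  shows "\<sigma> \<in> {f. (\<forall>x. x \<notin> X \<longrightarrow> f x = id x) \<and> (\<forall>x\<in>X. f x \<in> X)}"
proof -
  have bij: "bij_betw \<sigma> S S" and out: "\<And>z. z \<notin> S \<Longrightarrow> \<sigma> z = z"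
    using co unfolding cyclic_order_on_def by auto
  have "\<sigma> x \<in> X" if x: "x \<in> X" for x
  proof (cases "x \<in> S")
    case True then show ?thesis using bij bij_betwE sub by blast
  next
    case False then show ?thesis using out[OF False] x by simp
  qed
  moreover have "\<sigma> x = id x" if "x \<notin> X" for x using that sub out by auto
  ultimately show ?thesis by blast
qed

lemma finite_PT:
  assumes fW: "finite W" and fB: "finite B"
  shows "finite (PT W B)"
proof -
  let ?PB = "{f. (\<forall>x. x \<notin> B \<longrightarrow> f x = id x) \<and> (\<forall>x\<in>B. f x \<in> B)}"
  let ?PW = "{f. (\<forall>x. x \<notin> W \<longrightarrow> f x = id x) \<and> (\<forall>x\<in>W. f x \<in> W)}"
  let ?RW = "{f. (\<forall>x. x \<notin> W \<longrightarrow> f x = (\<lambda>_. id) x) \<and> (\<forall>x\<in>W. f x \<in> ?PB)}"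
  let ?RB = "{f. (\<forall>x. x \<notin> B \<longrightarrow> f x = (\<lambda>_. id) x) \<and> (\<forall>x\<in>B. f x \<in> ?PW)}"
  have fPB: "finite ?PB" by (rule finite_funs[OF fB fB])
  have fPW: "finite ?PW" by (rule finite_funs[OF fW fW])
  have fRW: "finite ?RW" by (rule finite_funs[OF fW fPB])
  have fRB: "finite ?RB" by (rule finite_funs[OF fB fPW])
  have "PT W B \<subseteq> Pow (W \<times> B) \<times> (?RW \<times> ?RB)"
  proof
    fix T assume T: "T \<in> PT W B"
    obtain E rw rb where Td: "T = (E, rw, rb)" using prod_cases3 by blast
    have m: "btree W B E" "\<forall>i\<in>W. cyclic_order_on (NW E i) (rw i)" "\<forall>i. i \<notin> W \<longrightarrow> rw i = id"
        "\<forall>j\<in>B. cyclic_order_on (NB E j) (rb j)" "\<forall>j. j \<notin> B \<longrightarrow> rb j = id"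
      using T unfolding Td PT_mem by blast+
    have sub: "E \<subseteq> W \<times> B" using m(1) unfolding btree_def by blast
    have "rw \<in> ?RW"
    proof -
      have "rw i \<in> ?PB" if i: "i \<in> W" for i
      proof -
        have "cyclic_order_on (NW E i) (rw i)" using m(2) i by blast
        moreover have "NW E i \<subseteq> B" using sub unfolding NW_def by auto
        ultimately show ?thesis by (rule co_perm)
      qed
      then have "\<forall>x\<in>W. rw x \<in> ?PB" by (intro ballI)
      moreover have "\<forall>x. x \<notin> W \<longrightarrow> rw x = (\<lambda>_. id) x" using m(3) by simp
      ultimately show ?thesis by (intro CollectI conjI)
    qed
    moreover have "rb \<in> ?RB"
    proof -
      have "rb j \<in> ?PW" if j: "j \<in> B" for j
      proof -
        have "cyclic_order_on (NB E j) (rb j)" using m(4) j by blast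
        moreover have "NB E j \<subseteq> W" using sub unfolding NB_def by auto
        ultimately show ?thesis by (rule co_perm)
      qed
      then have "\<forall>x\<in>B. rb x \<in> ?PW" by (intro ballI)
      moreover have "\<forall>x. x \<notin> B \<longrightarrow> rb x = (\<lambda>_. id) x" using m(5) by simp
      ultimately show ?thesis by (intro CollectI conjI)
    qed
    moreover have "E \<in> Pow (W \<times> B)" using sub by blast
    ultimately show "T \<in> Pow (W \<times> B) \<times> (?RW \<times> ?RB)" unfolding Td by (intro SigmaI)
  qed
  moreover have "finite (Pow (W \<times> B) \<times> (?RW \<times> ?RB))" using fW fB fRW fRB by simp
  ultimately show ?thesis by (rule finite_subset)
qed

lemma finite_Fib: "finite W \<Longrightarrow> finite B \<Longrightarrow> finite (Fib W B d e)"
  unfolding Fib_def using finite_PT by simp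

lemma NW_insert: "NW (insert (a, b) E) x = (if x = a then insert b (NW E x) else NW E x)"
  unfolding NW_def by auto
lemma NB_insert: "NB (insert (a, b) E) y = (if y = b then insert a (NB E y) else NB E y)"
  unfolding NB_def by auto
lemma NW_Diff: "NW (E - {(a, b)}) x = (if x = a then NW E x - {b} else NW E x)"
  unfolding NW_def by auto
lemma NB_Diff: "NB (E - {(a, b)}) y = (if y = b then NB E y - {a} else NB E y)"
  unfolding NB_def by auto

section \<open>Swap symmetry\<close>

definition ss :: "nat + nat \<Rightarrow> nat + nat" where "ss = case_sum Inr Inl"

lemma ss_simps[simp]: "ss (Inl a) = Inr a" "ss (Inr a) = Inl a"
  by (simp_all add: ss_def)

lemma ss_ss[simp]: "ss (ss a) = a" by (cases a) simp_all

lemma swap_mem[simp]: "(x, y) \<in> prod.swap ` E \<longleftrightarrow> (y, x) \<in> E"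
  by force

lemma adj_swap: "(a, b) \<in> bip_adj (prod.swap ` E) \<longleftrightarrow> (ss a, ss b) \<in> bip_adj E"
  by (cases a; cases b) simp_all

lemma VV_swap: "u \<in> VV B W \<longleftrightarrow> ss u \<in> VV W B"
  by (cases u) (auto simp: VV_def)

lemma rtr_swap: "(x, y) \<in> (bip_adj E)\<^sup>* \<Longrightarrow> (ss x, ss y) \<in> (bip_adj (prod.swap ` E))\<^sup>*"
proof (induction rule: rtrancl_induct)
  case base then show ?case by simp
next
  case (step y z)
  have "(ss y, ss z) \<in> bip_adj (prod.swap ` E)" using step(2) by (simp add: adj_swap)
  then show ?case using step(3) by (rule rtrancl_into_rtrancl[rotated])
qed

lemma nocyc_swap: "nocyc E \<Longrightarrow> nocyc (prod.swap ` E)"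
  unfolding nocyc_def
proof (erule contrapos_nn)
  assume "\<exists>vs. 3 \<le> length vs \<and> distinct vs \<and> (\<forall>k<length vs. (vs ! k, vs ! ((k + 1) mod length vs)) \<in> bip_adj (prod.swap ` E))"
  then obtain vs where v: "3 \<le> length vs" "distinct vs"
    "\<forall>k<length vs. (vs ! k, vs ! ((k + 1) mod length vs)) \<in> bip_adj (prod.swap ` E)" by blast
  let ?w = "map ss vs"
  have "inj ss" by (metis injI ss_ss)
  then have "inj_on ss (set vs)" using inj_on_subset by blast
  then have "distinct ?w" using v(2) by (simp add: distinct_map)
  moreover have "\<forall>k<length ?w. (?w ! k, ?w ! ((k + 1) mod length ?w)) \<in> bip_adj E"
  proof (intro allI impI)
    fix k assume k: "k < length ?w"
    have L0: "0 < length vs" using v(1) by linarith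
    have k2: "(k + 1) mod length vs < length vs" using mod_less_divisor[OF L0] by blast
    have "(vs ! k, vs ! ((k + 1) mod length vs)) \<in> bip_adj (prod.swap ` E)" using v(3) k by simp
    then show "(?w ! k, ?w ! ((k + 1) mod length ?w)) \<in> bip_adj E"
      using k k2 by (simp add: adj_swap)
  qed
  moreover have "3 \<le> length ?w" using v(1) by simp
  ultimately show "\<exists>vs. 3 \<le> length vs \<and> distinct vs \<and> (\<forall>k<length vs. (vs ! k, vs ! ((k + 1) mod length vs)) \<in> bip_adj E)"
    by blast
qed

lemma btree_swap: "btree W B E \<Longrightarrow> btree B W (prod.swap ` E)"
proof -
  assume t: "btree W B E"
  have sub: "E \<subseteq> W \<times> B" and conn: "\<forall>u\<in>VV W B. \<forall>v\<in>VV W B. (u, v) \<in> (bip_adj E)\<^sup>*"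
    and nc: "nocyc E" using t unfolding btree_def by auto
  have "prod.swap ` E \<subseteq> B \<times> W" using sub by auto
  moreover have "(u, v) \<in> (bip_adj (prod.swap ` E))\<^sup>*" if "u \<in> VV B W" "v \<in> VV B W" for u v
  proof -
    have "ss u \<in> VV W B" "ss v \<in> VV W B" using that VV_swap by blast+
    then have "(ss u, ss v) \<in> (bip_adj E)\<^sup>*" using conn by blast
    from rtr_swap[OF this] show ?thesis by simp
  qed
  ultimately show ?thesis unfolding btree_def using nocyc_swap[OF nc] by blast
qed

lemma NW_swap: "NW (prod.swap ` E) = NB E" unfolding NW_def NB_def by auto
lemma NB_swap: "NB (prod.swap ` E) = NW E" unfolding NW_def NB_def by auto

definition sw :: "((nat \<times> nat) set \<times> (nat \<Rightarrow> nat \<Rightarrow> nat) \<times> (nat \<Rightarrow> nat \<Rightarrow> nat)) \<Rightarrow> ((nat \<times> nat) set \<times> (nat \<Rightarrow> nat \<Rightarrow> nat) \<times> (nat \<Rightarrow> nat \<Rightarrow> nat))" where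
  "sw T = (case T of (E, rw, rb) \<Rightarrow> (prod.swap ` E, rb, rw))"

lemma sw_sw: "sw (sw T) = T"
proof -
  obtain E rw rb where Td: "T = (E, rw, rb)" using prod_cases3 by blast
  have "prod.swap ` prod.swap ` E = E" by (simp add: image_image)
  then show ?thesis unfolding Td sw_def by simp
qed

lemma sw_Fib: "T \<in> Fib W B d e \<Longrightarrow> sw T \<in> Fib B W e d"
proof -
  assume T: "T \<in> Fib W B d e"
  obtain E rw rb where Td: "T = (E, rw, rb)" using prod_cases3 by blast
  have m: "btree W B E" "\<forall>i\<in>W. cyclic_order_on (NW E i) (rw i)" "\<forall>i. i \<notin> W \<longrightarrow> rw i = id"
        "\<forall>j\<in>B. cyclic_order_on (NB E j) (rb j)" "\<forall>j. j \<notin> B \<longrightarrow> rb j = id"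
        "\<forall>i\<in>W. card (NW E i) = d i" "\<forall>j\<in>B. card (NB E j) = e j"
    using T unfolding Td Fib_mem PT_mem by blast+
  show ?thesis unfolding Td sw_def
    using m btree_swap[OF m(1)] by (simp add: Fib_mem PT_mem NW_swap NB_swap)
qed

lemma card_Fib_swap: "card (Fib B W e d) = card (Fib W B d e)"
proof -
  have "bij_betw sw (Fib W B d e) (Fib B W e d)"
    by (rule bij_betw_byWitness[where f' = sw]) (auto simp: sw_sw sw_Fib)
  then show ?thesis by (simp add: bij_betw_same_card)
qed



lemma closed_reach:
  assumes "(a, b) \<in> r\<^sup>*" "a \<in> R" "\<And>x y. x \<in> R \<Longrightarrow> (x, y) \<in> r \<Longrightarrow> y \<in> R"
  shows "b \<in> R"
  using assms(1)
proof (induction rule: rtrancl_induct)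
  case base then show ?case using assms(2) .
next
  case (step y z) then show ?case using assms(3) by blast
qed

lemma R_white:
  assumes fW: "finite W" and fB: "finite B" and i: "i \<in> W" and W2: "2 \<le> card W" and di: "d i = 1"
  shows "card (Fib W B d e) = (\<Sum>j\<in>{j\<in>B. 2 \<le> e j}. (e j - 1) * card (Fib (W - {i}) B d (e(j := e j - 1))))"
proof -
  define J where "J = {j\<in>B. 2 \<le> e j}"
  define F' where "F' j = Fib (W - {i}) B d (e(j := e j - 1))" for j
  define A where "A = Sigma J (\<lambda>j. Sigma (F' j) (\<lambda>T. NB (fst T) j))"
  define f :: "nat \<times> ((nat \<times> nat) set \<times> (nat \<Rightarrow> nat \<Rightarrow> nat) \<times> (nat \<Rightarrow> nat \<Rightarrow> nat)) \<times> nat \<Rightarrow> ((nat \<times> nat) set \<times> (nat \<Rightarrow> nat \<Rightarrow> nat) \<times> (nat \<Rightarrow> nat \<Rightarrow> nat))"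
    where "f = (\<lambda>(j, (E, rw, rb), p). (insert (i, j) E, rw, rb(j := ins (rb j) p i)))"
  have f_eq: "f (j, (E, rw, rb), p) = (insert (i, j) E, rw, rb(j := ins (rb j) p i))" for j E rw rb p
    unfolding f_def by simp
  have fWi: "finite (W - {i})" using fW by simp
  have fJ: "finite J" using fB unfolding J_def by simp
  have fF: "finite (F' j)" for j unfolding F'_def using finite_Fib[OF fWi fB] .
  have F'D: "btree (W - {i}) B E \<and> (\<forall>i'\<in>W - {i}. cyclic_order_on (NW E i') (rw i')) \<and> (\<forall>i'. i' \<notin> W - {i} \<longrightarrow> rw i' = id) \<and>
        (\<forall>j'\<in>B. cyclic_order_on (NB E j') (rb j')) \<and> (\<forall>j'. j' \<notin> B \<longrightarrow> rb j' = id) \<and>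
        (\<forall>i'\<in>W - {i}. card (NW E i') = d i') \<and> (\<forall>j'\<in>B. card (NB E j') = (e(j := e j - 1)) j')"
    if "(E, rw, rb) \<in> F' j" for E rw rb j
    using that unfolding F'_def Fib_mem PT_mem by blast
  have subF: "E \<subseteq> (W - {i}) \<times> B" if "(E, rw, rb) \<in> F' j" for E rw rb j
    using F'D[OF that] unfolding btree_def by blast
  have noi: "(i, j') \<notin> E" if "(E, rw, rb) \<in> F' j" for E rw rb j j'
    using subF[OF that] by blast
  have fN: "finite (NB E j')" if "(E, rw, rb) \<in> F' j" for E rw rb j j'
  proof -
    have "NB E j' \<subseteq> W" using subF[OF that] unfolding NB_def by blast
    then show ?thesis using fW by (rule finite_subset)
  qed
  have cardA: "card A = (\<Sum>j\<in>J. (e j - 1) * card (F' j))"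
  proof -
    have "card A = (\<Sum>j\<in>J. card (Sigma (F' j) (\<lambda>T. NB (fst T) j)))"
      unfolding A_def
    proof (rule card_SigmaI[OF fJ], intro ballI)
      fix j assume "j \<in> J"
      show "finite (Sigma (F' j) (\<lambda>T. NB (fst T) j))"
      proof (rule finite_SigmaI[OF fF], clarify)
        fix E rw rb assume "(E, rw, rb) \<in> F' j"
        then show "finite (NB (fst (E, rw, rb)) j)" using fN by simp
      qed
    qed
    also have "\<dots> = (\<Sum>j\<in>J. (e j - 1) * card (F' j))"
    proof (rule sum.cong[OF refl])
      fix j assume jJ: "j \<in> J"
      have jB: "j \<in> B" using jJ unfolding J_def by simp
      have "card (Sigma (F' j) (\<lambda>T. NB (fst T) j)) = (\<Sum>T\<in>F' j. card (NB (fst T) j))"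
      proof (rule card_SigmaI[OF fF], clarify)
        fix E rw rb assume "(E, rw, rb) \<in> F' j"
        then show "finite (NB (fst (E, rw, rb)) j)" using fN by simp
      qed
      also have "\<dots> = (\<Sum>T\<in>F' j. e j - 1)"
      proof (rule sum.cong[OF refl])
        fix T assume T: "T \<in> F' j"
        obtain E rw rb where Td: "T = (E, rw, rb)" using prod_cases3 by blast
        have "card (NB E j) = (e(j := e j - 1)) j" using F'D[of E rw rb j] T Td jB by blast
        then show "card (NB (fst T) j) = e j - 1" using Td by simp
      qed
      also have "\<dots> = (e j - 1) * card (F' j)" by simp
      finally show "card (Sigma (F' j) (\<lambda>T. NB (fst T) j)) = (e j - 1) * card (F' j)" .
    qed
    finally show ?thesis .
  qed
  have inj: "inj_on f A"
  proof (rule inj_onI)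
    fix x y assume x: "x \<in> A" and y: "y \<in> A" and fe: "f x = f y"
    obtain j1 T1 p1 where xd: "x = (j1, T1, p1)" using prod_cases3 by blast
    obtain E1 rw1 rb1 where T1d: "T1 = (E1, rw1, rb1)" using prod_cases3 by blast
    obtain j2 T2 p2 where yd: "y = (j2, T2, p2)" using prod_cases3 by blast
    obtain E2 rw2 rb2 where T2d: "T2 = (E2, rw2, rb2)" using prod_cases3 by blast
    have x': "j1 \<in> J" "(E1, rw1, rb1) \<in> F' j1" "p1 \<in> NB E1 j1"
      using x unfolding xd T1d A_def by auto
    have y': "j2 \<in> J" "(E2, rw2, rb2) \<in> F' j2" "p2 \<in> NB E2 j2"
      using y unfolding yd T2d A_def by auto
    have fe': "insert (i, j1) E1 = insert (i, j2) E2" "rw1 = rw2"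
      "rb1(j1 := ins (rb1 j1) p1 i) = rb2(j2 := ins (rb2 j2) p2 i)"
      using fe unfolding xd yd T1d T2d f_eq by simp_all
    have "(i, j2) \<in> insert (i, j1) E1" using fe'(1) by simp
    then have jj: "j1 = j2" using noi[OF x'(2)] by auto
    have EE: "E1 = E2"
    proof -
      have "E1 = insert (i, j1) E1 - {(i, j1)}" using noi[OF x'(2)] by auto
      also have "\<dots> = insert (i, j2) E2 - {(i, j2)}" using fe'(1) jj by simp
      also have "\<dots> = E2" using noi[OF y'(2)] by auto
      finally show ?thesis .
    qed
    have j1B: "j1 \<in> B" using x'(1) unfolding J_def by simp
    have co1: "cyclic_order_on (NB E1 j1) (rb1 j1)" using F'D[OF x'(2)] j1B by blast
    have co2: "cyclic_order_on (NB E1 j1) (rb2 j1)" using F'D[OF y'(2)] j1B EE jj by blast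
    have ni: "i \<notin> NB E1 j1" using noi[OF x'(2)] unfolding NB_def by blast
    have p2': "p2 \<in> NB E1 j1" using y'(3) EE jj by simp
    have insq: "ins (rb1 j1) p1 i = ins (rb2 j1) p2 i" using fun_cong[OF fe'(3), of j1] jj by simp
    have rbj: "rb1 j1 = rb2 j1"
    proof -
      have "rb1 j1 = rem (ins (rb1 j1) p1 i) i" using rem_ins[OF co1 ni x'(3)] by simp
      also have "\<dots> = rem (ins (rb2 j1) p2 i) i" using insq by simp
      also have "\<dots> = rb2 j1" using rem_ins[OF co2 ni p2'] by simp
      finally show ?thesis .
    qed
    have rbb: "rb1 = rb2"
    proof
      fix z show "rb1 z = rb2 z"
      proof (cases "z = j1")
        case True then show ?thesis using rbj by simp
      next
        case False
        then show ?thesis using fun_cong[OF fe'(3), of z] jj by simp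
      qed
    qed
    have img1: "rb1 j1 ` NB E1 j1 \<subseteq> NB E1 j1"
      using co1 unfolding cyclic_order_on_def bij_betw_def by blast
    have pp: "p1 = p2"
      using ins_pred_unique[of "rb1 j1" p1 i p2, OF _ img1 ni x'(3)] insq rbj by simp
    show "x = y" unfolding xd yd T1d T2d using jj EE fe'(2) rbb pp by simp
  qed
  have img: "f ` A = Fib W B d e"
  proof
    show "f ` A \<subseteq> Fib W B d e"
    proof
      fix T assume "T \<in> f ` A"
      then obtain x where x: "x \<in> A" and Tx: "T = f x" by blast
      obtain j T1 p where xd: "x = (j, T1, p)" using prod_cases3 by blast
      obtain E rw rb where T1d: "T1 = (E, rw, rb)" using prod_cases3 by blast
      have x': "j \<in> J" "(E, rw, rb) \<in> F' j" "p \<in> NB E j"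
        using x unfolding xd T1d A_def by auto
      have jB: "j \<in> B" and ej: "2 \<le> e j" using x'(1) unfolding J_def by auto
      note m = F'D[OF x'(2)]
      have bt: "btree (W - {i}) B E" using m by blast
      have ni: "(i, j') \<notin> E" for j' using noi[OF x'(2)] .
      have NWi: "NW E i = {}" using ni unfolding NW_def by blast
      have niB: "i \<notin> NB E j" using ni unfolding NB_def by blast
      have coj: "cyclic_order_on (NB E j) (rb j)" using m jB by blast
      have fNj: "finite (NB E j)" using fN[OF x'(2)] .
      let ?E = "insert (i, j) E" and ?rb = "rb(j := ins (rb j) p i)"
      have T_eq: "T = (?E, rw, ?rb)" unfolding Tx xd T1d f_eq ..
      have bt': "btree W B ?E"
        using add_leaf[OF bt _ jB, of i] i by (simp add: insert_absorb)
      have cw: "\<forall>i'\<in>W. cyclic_order_on (NW ?E i') (rw i')"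
      proof
        fix i' assume i': "i' \<in> W"
        show "cyclic_order_on (NW ?E i') (rw i')"
        proof (cases "i' = i")
          case True
          have "rw i = id" using m by blast
          moreover have "NW ?E i = {j}" using NWi by (simp add: NW_insert)
          ultimately show ?thesis using True by (simp add: cyclic_singleton)
        next
          case False
          then have "NW ?E i' = NW E i'" by (simp add: NW_insert)
          moreover have "cyclic_order_on (NW E i') (rw i')" using m i' False by blast
          ultimately show ?thesis by simp
        qed
      qed
      have ow: "\<forall>i'. i' \<notin> W \<longrightarrow> rw i' = id" using m by blast
      have cb: "\<forall>j'\<in>B. cyclic_order_on (NB ?E j') (?rb j')"
      proof
        fix j' assume j': "j' \<in> B"
        show "cyclic_order_on (NB ?E j') (?rb j')"
        proof (cases "j' = j")
          case True
          have "cyclic_order_on (insert i (NB E j)) (ins (rb j) p i)"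
            by (rule ins_cyclic[OF coj fNj niB x'(3)])
          then show ?thesis using True by (simp add: NB_insert)
        next
          case False
          then have "NB ?E j' = NB E j'" by (simp add: NB_insert)
          moreover have "cyclic_order_on (NB E j') (rb j')" using m j' by blast
          ultimately show ?thesis using False by simp
        qed
      qed
      have ob: "\<forall>j'. j' \<notin> B \<longrightarrow> ?rb j' = id"
      proof (intro allI impI)
        fix j' assume "j' \<notin> B"
        then have "j' \<noteq> j" "rb j' = id" using jB m by auto
        then show "?rb j' = id" by simp
      qed
      have dw: "\<forall>i'\<in>W. card (NW ?E i') = d i'"
      proof
        fix i' assume i': "i' \<in> W"
        show "card (NW ?E i') = d i'"
        proof (cases "i' = i")
          case True then show ?thesis using NWi di by (simp add: NW_insert)
        next
          case False
          then have "card (NW E i') = d i'" using m i' by blast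
          then show ?thesis using False by (simp add: NW_insert)
        qed
      qed
      have db: "\<forall>j'\<in>B. card (NB ?E j') = e j'"
      proof
        fix j' assume j': "j' \<in> B"
        have c: "card (NB E j') = (e(j := e j - 1)) j'" using m j' by blast
        show "card (NB ?E j') = e j'"
        proof (cases "j' = j")
          case True
          have "card (insert i (NB E j)) = Suc (card (NB E j))" using fNj niB by simp
          then show ?thesis using True c ej by (simp add: NB_insert)
        next
          case False
          then show ?thesis using c by (simp add: NB_insert)
        qed
      qed
      show "T \<in> Fib W B d e" unfolding T_eq Fib_mem PT_mem using bt' cw ow cb ob dw db by blast
    qed
  next
    show "Fib W B d e \<subseteq> f ` A"
    proof
      fix T assume T: "T \<in> Fib W B d e"
      obtain E rw rb where Td: "T = (E, rw, rb)" using prod_cases3 by blast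
      have m: "btree W B E" "\<forall>i\<in>W. cyclic_order_on (NW E i) (rw i)" "\<forall>i. i \<notin> W \<longrightarrow> rw i = id"
        "\<forall>j\<in>B. cyclic_order_on (NB E j) (rb j)" "\<forall>j. j \<notin> B \<longrightarrow> rb j = id"
        "\<forall>i\<in>W. card (NW E i) = d i" "\<forall>j\<in>B. card (NB E j) = e j"
        using T unfolding Td Fib_mem PT_mem by blast+
      have sub: "E \<subseteq> W \<times> B" using m(1) unfolding btree_def by blast
      have conn: "\<forall>u\<in>VV W B. \<forall>v\<in>VV W B. (u, v) \<in> (bip_adj E)\<^sup>*" using m(1) unfolding btree_def by blast
      have "card (NW E i) = 1" using m(6) i di by simp
      then have "\<exists>j. NW E i = {j}" by (simp add: card_1_singleton_iff)
      then obtain j where NWi: "NW E i = {j}" by blast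
      have ij: "(i, j) \<in> E" using NWi unfolding NW_def by blast
      have jB: "j \<in> B" using ij sub by blast
      have fNj: "finite (NB E j)"
      proof -
        have "NB E j \<subseteq> W" using sub unfolding NB_def by blast
        then show ?thesis using fW by (rule finite_subset)
      qed
      have iNj: "i \<in> NB E j" using ij unfolding NB_def by simp
      have NBne: "NB E j \<noteq> {i}"
      proof
        assume h: "NB E j = {i}"
        obtain i2 where i2: "i2 \<in> W" "i2 \<noteq> i"
        proof -
          have "\<not> W \<subseteq> {i}"
          proof
            assume "W \<subseteq> {i}"
            then have "card W \<le> card {i}" by (rule card_mono[rotated]) simp
            then show False using W2 by simp
          qed
          then show ?thesis using that by blast
        qed
        have "(Inl i, Inl i2) \<in> (bip_adj E)\<^sup>*" using conn i i2(1) unfolding VV_def by blast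
        moreover have "Inl i \<in> {Inl i, Inr j}" by simp
        moreover have "y \<in> {Inl i, Inr j}" if xR: "x \<in> {Inl i, Inr j}" and xy: "(x, y) \<in> bip_adj E" for x y
        proof (cases "x = Inl i")
          case True
          then obtain j' where "y = Inr j'" "(i, j') \<in> E" using adj_Inl_to xy by blast
          moreover then have "j' = j" using NWi unfolding NW_def by blast
          ultimately show ?thesis by simp
        next
          case False
          then have "x = Inr j" using xR by simp
          then obtain i' where "y = Inl i'" "(i', j) \<in> E" using adj_Inr_to xy by blast
          moreover then have "i' = i" using h unfolding NB_def by blast
          ultimately show ?thesis by simp
        qed
        ultimately have "Inl i2 \<in> {Inl i, Inr j}" by (rule closed_reach)
        then show False using i2(2) by simp
      qed
      have ej: "2 \<le> e j"
      proof -
        obtain i' where "i' \<in> NB E j" "i' \<noteq> i" using NBne iNj by blast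
        then have "{i, i'} \<subseteq> NB E j" using iNj by blast
        then have "card {i, i'} \<le> card (NB E j)" by (rule card_mono[OF fNj])
        then show ?thesis using m(7) jB \<open>i' \<noteq> i\<close> by simp
      qed
      define S where "S = NB E j - {i}"
      have S: "insert i S = NB E j" "i \<notin> S" "finite S" "S \<noteq> {}"
        using iNj NBne fNj unfolding S_def by auto
      have coj: "cyclic_order_on (insert i S) (rb j)" using m(4) jB S(1) by simp
      obtain p where p: "p \<in> S" "rb j p = i" "cyclic_order_on S (rem (rb j) i)" "ins (rem (rb j) i) p i = rb j"
        using rem_cyclic[OF coj S(3) S(2) S(4)] by blast
      let ?E = "E - {(i, j)}" and ?rb = "rb(j := rem (rb j) i)"
      have bt: "btree (W - {i}) B ?E" by (rule remove_leaf[OF m(1) i NWi])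
      have "cyclic_order_on (NW E i) (rw i)" using m(2) i by blast
      then have rwi: "rw i = id" using NWi by (simp add: cyclic_singleton)
      have T'F: "(?E, rw, ?rb) \<in> F' j"
        unfolding F'_def Fib_mem PT_mem
      proof (intro conjI)
        show "btree (W - {i}) B ?E" by (rule bt)
        show "\<forall>i'\<in>W - {i}. cyclic_order_on (NW ?E i') (rw i')" using m(2) by (simp add: NW_Diff)
        show "\<forall>i'. i' \<notin> W - {i} \<longrightarrow> rw i' = id" using m(3) rwi by auto
        show "\<forall>j'\<in>B. cyclic_order_on (NB ?E j') (?rb j')"
        proof
          fix j' assume j': "j' \<in> B"
          show "cyclic_order_on (NB ?E j') (?rb j')"
          proof (cases "j' = j")
            case True then show ?thesis using p(3) unfolding S_def by (simp add: NB_Diff)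
          next
            case False then show ?thesis using m(4) j' by (simp add: NB_Diff)
          qed
        qed
        show "\<forall>j'. j' \<notin> B \<longrightarrow> ?rb j' = id" using m(5) jB by auto
        show "\<forall>i'\<in>W - {i}. card (NW ?E i') = d i'" using m(6) by (simp add: NW_Diff)
        show "\<forall>j'\<in>B. card (NB ?E j') = (e(j := e j - 1)) j'"
        proof
          fix j' assume j': "j' \<in> B"
          show "card (NB ?E j') = (e(j := e j - 1)) j'"
          proof (cases "j' = j")
            case True
            have "card (NB E j - {i}) = card (NB E j) - 1" using iNj fNj by simp
            then show ?thesis using True m(7) jB by (simp add: NB_Diff)
          next
            case False then show ?thesis using m(7) j' by (simp add: NB_Diff)
          qed
        qed
      qed
      have pN: "p \<in> NB ?E j" using p(1) unfolding S_def by (simp add: NB_Diff)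
      have jJ: "j \<in> J" using jB ej unfolding J_def by simp
      have xA: "(j, (?E, rw, ?rb), p) \<in> A" unfolding A_def using jJ T'F pN by simp
      have "f (j, (?E, rw, ?rb), p) = (insert (i, j) ?E, rw, ?rb(j := ins (?rb j) p i))" by (rule f_eq)
      also have "\<dots> = (E, rw, rb)" using ij p(4) by (simp add: insert_absorb)
      finally have "T = f (j, (?E, rw, ?rb), p)" using Td by simp
      then show "T \<in> f ` A" using xA by (rule image_eqI)
    qed
  qed
  have "card (Fib W B d e) = card A" using card_image[OF inj] img by simp
  then show ?thesis using cardA unfolding J_def F'_def by simp
qed



lemma base:
  assumes cW: "card W = 1" and cB: "card B = 1"
  shows "card (Fib W B d e) = cnt W B d e"
proof -
  obtain a where Wa: "W = {a}" using cW card_1_singleton_iff by (metis One_nat_def)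
  obtain b where Bb: "B = {b}" using cB card_1_singleton_iff by (metis One_nat_def)
  define T0 :: "(nat \<times> nat) set \<times> (nat \<Rightarrow> nat \<Rightarrow> nat) \<times> (nat \<Rightarrow> nat \<Rightarrow> nat)"
    where "T0 = ({(a, b)}, \<lambda>_. id, \<lambda>_. id)"
  have NWab: "NW {(a, b)} a = {b}" and NBab: "NB {(a, b)} b = {a}" unfolding NW_def NB_def by auto
  have bt0: "btree {a} {b} {(a, b)}"
    unfolding btree_def
  proof (intro conjI)
    show "{(a, b)} \<subseteq> {a} \<times> {b}" by simp
    have e1: "(Inl a, Inr b) \<in> (bip_adj {(a, b)})\<^sup>*" by (simp add: r_into_rtrancl)
    have e2: "(Inr b, Inl a) \<in> (bip_adj {(a, b)})\<^sup>*" by (simp add: r_into_rtrancl)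
    show "\<forall>u\<in>VV {a} {b}. \<forall>v\<in>VV {a} {b}. (u, v) \<in> (bip_adj {(a, b)})\<^sup>*"
      unfolding VV_def using e1 e2 by auto
    show "nocyc {(a, b)}"
      unfolding nocyc_def
    proof
      assume "\<exists>vs. 3 \<le> length vs \<and> distinct vs \<and> (\<forall>k<length vs. (vs ! k, vs ! ((k + 1) mod length vs)) \<in> bip_adj {(a, b)})"
      then obtain vs where v: "3 \<le> length vs" "distinct vs"
        "\<forall>k<length vs. (vs ! k, vs ! ((k + 1) mod length vs)) \<in> bip_adj {(a, b)}" by blast
      have "set vs \<subseteq> VV {a} {b}"
      proof
        fix z assume "z \<in> set vs"
        then obtain k where k: "k < length vs" "vs ! k = z" by (metis in_set_conv_nth)
        have "(vs ! k, vs ! ((k + 1) mod length vs)) \<in> bip_adj {(a, b)}" using v(3) k(1) by blast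
        then show "z \<in> VV {a} {b}" using adj_in_VV[of "{(a, b)}" "{a}" "{b}"] k(2) by simp
      qed
      then have "card (set vs) \<le> card (VV {a} {b})" by (rule card_mono[rotated]) (simp add: VV_def)
      moreover have "card (VV {a} {b}) \<le> 2"
      proof -
        have "VV {a} {b} = {Inl a, Inr b}" by (auto simp: VV_def)
        then show ?thesis by (simp add: card_insert_if)
      qed
      ultimately show False using v(1) distinct_card[OF v(2)] by simp
    qed
  qed
  have PT0: "PT W B = {T0}"
  proof
    have "T0 \<in> PT W B" unfolding T0_def Wa Bb PT_mem
      using bt0 NWab NBab by (simp add: cyclic_singleton)
    then show "{T0} \<subseteq> PT W B" by simp
    show "PT W B \<subseteq> {T0}"
    proof
      fix T assume T: "T \<in> PT W B"
      obtain E rw rb where Td: "T = (E, rw, rb)" using prod_cases3 by blast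
      have m: "btree {a} {b} E" "\<forall>i\<in>{a}. cyclic_order_on (NW E i) (rw i)" "\<forall>i. i \<notin> {a} \<longrightarrow> rw i = id"
        "\<forall>j\<in>{b}. cyclic_order_on (NB E j) (rb j)" "\<forall>j. j \<notin> {b} \<longrightarrow> rb j = id"
        using T unfolding Td Wa Bb PT_mem by blast+
      have sub: "E \<subseteq> {(a, b)}" using m(1) unfolding btree_def by auto
      have "(Inl a, Inr b) \<in> (bip_adj E)\<^sup>*" using m(1) unfolding btree_def VV_def by blast
      then obtain c where "(Inl a, c) \<in> bip_adj E" using has_neighbour by blast
      then obtain j where "(a, j) \<in> E" using adj_Inl_to by blast
      then have Ed: "E = {(a, b)}" using sub by blast
      have "rw a = id" using m(2) Ed NWab by (simp add: cyclic_singleton)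
      then have rw: "rw = (\<lambda>_. id)" using m(3) by (auto simp: fun_eq_iff)
      have "rb b = id" using m(4) Ed NBab by (simp add: cyclic_singleton)
      then have rb: "rb = (\<lambda>_. id)" using m(5) by (auto simp: fun_eq_iff)
      show "T \<in> {T0}" unfolding Td T0_def Ed rw rb by simp
    qed
  qed
  have "Fib W B d e = (if d a = 1 \<and> e b = 1 then {T0} else {})"
    unfolding Fib_def PT0 unfolding T0_def Wa Bb using NWab NBab by auto
  moreover have "val W B d e = (d a = 1 \<and> e b = 1)"
    unfolding val_def Wa Bb by auto
  ultimately show ?thesis unfolding cnt_def using Wa Bb by simp
qed

lemma valeq:
  assumes fW: "finite W" and fB: "finite B" and i: "i \<in> W" and W2: "2 \<le> card W" and di: "d i = 1"
    and j: "j \<in> B" and ej: "2 \<le> e j"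
  shows "val (W - {i}) B d (e(j := e j - 1)) = val W B d e"
proof -
  let ?e = "e(j := e j - 1)"
  have s1: "sum d W = 1 + sum d (W - {i})" using sum.remove[OF fW i, of d] di by simp
  have s2a: "sum ?e B = ?e j + sum ?e (B - {j})" using sum.remove[OF fB j, of ?e] .
  have s2b: "sum ?e (B - {j}) = sum e (B - {j})" by (rule sum.cong) auto
  have s2c: "sum e B = e j + sum e (B - {j})" using sum.remove[OF fB j, of e] .
  have s2: "sum ?e B + 1 = sum e B" using s2a s2b s2c ej by simp
  have c1: "card (W - {i}) = card W - 1" by (rule card_Diff_singleton[OF i])
  have h1: "(\<forall>i'\<in>W - {i}. 1 \<le> d i') = (\<forall>i'\<in>W. 1 \<le> d i')"
  proof
    assume h: "\<forall>i'\<in>W - {i}. 1 \<le> d i'"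
    show "\<forall>i'\<in>W. 1 \<le> d i'"
    proof
      fix i' assume i': "i' \<in> W"
      show "1 \<le> d i'"
      proof (cases "i' = i")
        case True then show ?thesis using di by simp
      next
        case False then have "i' \<in> W - {i}" using i' by simp
        then show ?thesis using h by blast
      qed
    qed
  next
    assume h: "\<forall>i'\<in>W. 1 \<le> d i'"
    show "\<forall>i'\<in>W - {i}. 1 \<le> d i'"
    proof
      fix i' assume "i' \<in> W - {i}"
      then have "i' \<in> W" by simp
      then show "1 \<le> d i'" using h by blast
    qed
  qed
  have h2: "(\<forall>j'\<in>B. 1 \<le> ?e j') = (\<forall>j'\<in>B. 1 \<le> e j')"
  proof
    assume h: "\<forall>j'\<in>B. 1 \<le> ?e j'"
    show "\<forall>j'\<in>B. 1 \<le> e j'"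
    proof
      fix j' assume j': "j' \<in> B"
      have "1 \<le> ?e j'" using h j' by blast
      then show "1 \<le> e j'" by (cases "j' = j") simp_all
    qed
  next
    assume h: "\<forall>j'\<in>B. 1 \<le> e j'"
    show "\<forall>j'\<in>B. 1 \<le> ?e j'"
    proof
      fix j' assume j': "j' \<in> B"
      have "1 \<le> e j'" using h j' by blast
      then show "1 \<le> ?e j'" using ej by (cases "j' = j") simp_all
    qed
  qed
  have eq3: "(sum d (W - {i}) = card W - 1 + card B - 1) = (sum d W = card W + card B - 1)"
    unfolding s1 using W2 by presburger
  have eq4: "(sum ?e B = card W - 1 + card B - 1) = (sum e B = card W + card B - 1)"
    unfolding s2[symmetric] using W2 by presburger
  show ?thesis unfolding val_def h1 h2 c1 eq3 eq4 by (rule refl)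
qed

lemma sum_minus_one:
  assumes "finite B" "\<forall>j\<in>B. 1 \<le> e j"
  shows "(\<Sum>j\<in>B. e j - 1) + card B = sum e B"
proof -
  have "(\<Sum>j\<in>B. (e j - 1) + 1) = (\<Sum>j\<in>B. e j - 1) + (\<Sum>j\<in>B. 1)" by (rule sum.distrib)
  then have "(\<Sum>j\<in>B. e j - 1) + card B = (\<Sum>j\<in>B. (e j - 1) + 1)" by simp
  also have "\<dots> = sum e B" using assms(2) by (intro sum.cong) auto
  finally show ?thesis .
qed

lemma stepA:
  assumes IH: "\<And>W' B' d' e'. card W' + card B' < card W + card B \<Longrightarrow> finite W' \<Longrightarrow> finite B' \<Longrightarrow>
      W' \<noteq> {} \<Longrightarrow> B' \<noteq> {} \<Longrightarrow> card (Fib W' B' d' e') = cnt W' B' d' e'"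
    and fW: "finite W" and fB: "finite B" and i: "i \<in> W" and W2: "2 \<le> card W" and di: "d i = 1"
    and Bne: "B \<noteq> {}"
  shows "card (Fib W B d e) = cnt W B d e"
proof -
  define J where "J = {j\<in>B. 2 \<le> e j}"
  let ?K = "fact (card W - 2) * fact (card B - 1) :: nat"
  have c1: "card (W - {i}) = card W - 1" by (rule card_Diff_singleton[OF i])
  have Wne: "W - {i} \<noteq> {}"
  proof
    assume h: "W - {i} = {}"
    have "card (W - {i}) = 0" unfolding h by (rule card.empty)
    then show False using c1 W2 by simp
  qed
  have "card (Fib W B d e) = (\<Sum>j\<in>J. (e j - 1) * card (Fib (W - {i}) B d (e(j := e j - 1))))"
    unfolding J_def by (rule R_white[where d = d and e = e, OF fW fB i W2 di])
  also have "\<dots> = (\<Sum>j\<in>J. (e j - 1) * (if val W B d e then ?K else 0))"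
  proof (rule sum.cong[OF refl])
    fix j assume jJ: "j \<in> J"
    have jB: "j \<in> B" and ej: "2 \<le> e j" using jJ unfolding J_def by auto
    have "card (W - {i}) + card B < card W + card B" using c1 W2 by simp
    then have "card (Fib (W - {i}) B d (e(j := e j - 1))) = cnt (W - {i}) B d (e(j := e j - 1))"
      using IH fW fB Wne Bne by simp
    also have "\<dots> = (if val W B d e then ?K else 0)"
      unfolding cnt_def valeq[where d = d and e = e, OF fW fB i W2 di jB ej] c1 by (simp add: numeral_2_eq_2)
    finally show "(e j - 1) * card (Fib (W - {i}) B d (e(j := e j - 1))) = (e j - 1) * (if val W B d e then ?K else 0)"
      by simp
  qed
  also have "\<dots> = (\<Sum>j\<in>J. e j - 1) * (if val W B d e then ?K else 0)"
    by (simp add: sum_distrib_right)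
  also have "\<dots> = cnt W B d e"
  proof (cases "val W B d e")
    case True
    then have e1: "\<forall>j\<in>B. 1 \<le> e j" and se: "sum e B = card W + card B - 1" unfolding val_def by auto
    have "(\<Sum>j\<in>J. e j - 1) = (\<Sum>j\<in>B. e j - 1)"
      by (rule sum.mono_neutral_left) (use fB in \<open>auto simp: J_def\<close>)
    also have "\<dots> = card W - 1" using sum_minus_one[OF fB e1] se W2 by simp
    finally have sJ: "(\<Sum>j\<in>J. e j - 1) = card W - 1" .
    have "(card W - 1) * fact (card W - 2) = (fact (card W - 1) :: nat)"
    proof -
      have "card W - 1 = Suc (card W - 2)" using W2 by simp
      then show ?thesis by (simp add: fact_Suc)
    qed
    then show ?thesis using True sJ unfolding cnt_def by (simp add: mult.assoc)
  next
    case False then show ?thesis unfolding cnt_def by simp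
  qed
  finally show ?thesis .
qed

lemma main:
  "finite W \<Longrightarrow> finite B \<Longrightarrow> W \<noteq> {} \<Longrightarrow> B \<noteq> {} \<Longrightarrow> card (Fib W B d e) = cnt W B d e"
proof (induction "card W + card B" arbitrary: W B d e rule: less_induct)
  case less
  have IH: "\<And>W' B' d' e'. card W' + card B' < card W + card B \<Longrightarrow> finite W' \<Longrightarrow> finite B' \<Longrightarrow>
      W' \<noteq> {} \<Longrightarrow> B' \<noteq> {} \<Longrightarrow> card (Fib W' B' d' e') = cnt W' B' d' e'"
    using less.hyps by blast
  have fW: "finite W" and fB: "finite B" and Wne: "W \<noteq> {}" and Bne: "B \<noteq> {}" using less.prems by auto
  have cW1: "1 \<le> card W" using fW Wne by (simp add: Suc_le_eq card_gt_0_iff)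
  have cB1: "1 \<le> card B" using fB Bne by (simp add: Suc_le_eq card_gt_0_iff)
  show ?case
  proof (cases "card W = 1 \<and> card B = 1")
    case True then show ?thesis using base by blast
  next
    case nb: False
    show ?thesis
    proof (cases "\<exists>i\<in>W. d i = 1 \<and> 2 \<le> card W")
      case True
      then obtain i where i: "i \<in> W" "d i = 1" "2 \<le> card W" by blast
      show ?thesis by (rule stepA[where W = W and B = B and d = d and e = e, OF IH fW fB i(1) i(3) i(2) Bne])
    next
      case nA: False
      show ?thesis
      proof (cases "\<exists>j\<in>B. e j = 1 \<and> 2 \<le> card B")
        case True
        then obtain j where j: "j \<in> B" "e j = 1" "2 \<le> card B" by blast
        have IH': "\<And>W' B' d' e'. card W' + card B' < card B + card W \<Longrightarrow> finite W' \<Longrightarrow> finite B' \<Longrightarrow>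
          W' \<noteq> {} \<Longrightarrow> B' \<noteq> {} \<Longrightarrow> card (Fib W' B' d' e') = cnt W' B' d' e'"
          using IH by (simp add: add.commute)
        have "card (Fib W B d e) = card (Fib B W e d)" by (rule card_Fib_swap[symmetric])
        also have "\<dots> = cnt B W e d" by (rule stepA[where W = B and B = W and d = e and e = d, OF IH' fB fW j(1) j(3) j(2) Wne])
        also have "\<dots> = cnt W B d e" by (rule cnt_swap)
        finally show ?thesis .
      next
        case nB: False
        have nv: "\<not> val W B d e"
        proof
          assume v: "val W B d e"
          then have d1: "\<forall>i\<in>W. 1 \<le> d i" and e1: "\<forall>j\<in>B. 1 \<le> e j"
            and sd: "sum d W = card W + card B - 1" and se: "sum e B = card W + card B - 1"
            unfolding val_def by auto
          have bW: "2 * card W \<le> sum d W" if "2 \<le> card W"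
          proof -
            have "\<forall>i\<in>W. 2 \<le> d i" using d1 nA that by force
            then have "(\<Sum>i\<in>W. 2) \<le> sum d W" by (intro sum_mono) blast
            then show ?thesis by simp
          qed
          have bB: "2 * card B \<le> sum e B" if "2 \<le> card B"
          proof -
            have "\<forall>j\<in>B. 2 \<le> e j" using e1 nB that by force
            then have "(\<Sum>j\<in>B. 2) \<le> sum e B" by (intro sum_mono) blast
            then show ?thesis by simp
          qed
          show False
          proof (cases "2 \<le> card W")
            case True
            note w = bW[OF True]
            show False
            proof (cases "2 \<le> card B")
              case True then show False using w bB[OF True] sd se by linarith
            next
              case False then show False using w sd cB1 True by linarith
            qed
          next
            case False
            then have "2 \<le> card B" using nb cW1 cB1 by linarith
            then show False using bB se False cW1 by linarith
          qed
        qed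
        have emp: "Fib W B d e = {}"
        proof (rule ccontr)
          assume "Fib W B d e \<noteq> {}"
          then obtain T where T: "T \<in> Fib W B d e" by blast
          obtain E rw rb where Td: "T = (E, rw, rb)" using prod_cases3 by blast
          have m: "btree W B E" "\<forall>i\<in>W. card (NW E i) = d i" "\<forall>j\<in>B. card (NB E j) = e j"
            using T unfolding Td Fib_mem PT_mem by blast+
          have sub: "E \<subseteq> W \<times> B" using m(1) unfolding btree_def by blast
          obtain a where a: "a \<in> W" using Wne by blast
          obtain b where b: "b \<in> B" using Bne by blast
          have aV: "Inl a \<in> VV W B" and bV: "Inr b \<in> VV W B" using a b unfolding VV_def by auto
          have ab: "Inl a \<noteq> Inr b" by simp
          note dp = deg_pos[OF m(1) aV bV ab]
          show False
          proof (cases "card W = 1")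
            case True
            then obtain w where Ww: "W = {w}" using card_1_singleton_iff by (metis One_nat_def)
            have "2 \<le> card B" using nb True cB1 by linarith
            moreover have "e b = 1"
            proof -
              have "NB E b \<subseteq> {w}" using sub Ww unfolding NB_def by blast
              moreover have "NB E b \<noteq> {}" using dp(2) b by blast
              ultimately have nb1: "NB E b = {w}" by blast
              have "card (NB E b) = e b" using m(3) b by blast
              then show ?thesis using nb1 by simp
            qed
            ultimately show False using nB b by blast
          next
            case cW: False
            show False
            proof (cases "card B = 1")
              case True
              then obtain w where Bw: "B = {w}" using card_1_singleton_iff by (metis One_nat_def)
              have "2 \<le> card W" using cW cW1 by linarith
              moreover have "d a = 1"
              proof -
                have "NW E a \<subseteq> {w}" using sub Bw unfolding NW_def by blast
                moreover have "NW E a \<noteq> {}" using dp(1) a by blast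
                ultimately have nw1: "NW E a = {w}" by blast
                have "card (NW E a) = d a" using m(2) a by blast
                then show ?thesis using nw1 by simp
              qed
              ultimately show False using nA a by blast
            next
              case False
              have W2: "2 \<le> card W" and B2: "2 \<le> card B" using cW False cW1 cB1 by linarith+
              from leaf_exists[OF m(1) fW fB aV bV ab]
              show False
              proof
                assume "\<exists>i\<in>W. card (NW E i) = 1"
                then obtain i where "i \<in> W" "card (NW E i) = 1" by blast
                then show False using m(2) nA W2 by auto
              next
                assume "\<exists>j\<in>B. card (NB E j) = 1"
                then obtain j where "j \<in> B" "card (NB E j) = 1" by blast
                then show False using m(3) nB B2 by auto
              qed
            qed
          qed
        qed
        show ?thesis using nv emp unfolding cnt_def by simp
      qed
    qed
  qed
qed



lemma card_comp:
  assumes ks: "k \<le> s"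
  shows "card {d. (\<forall>i. i \<notin> {..<k} \<longrightarrow> d i = (0::nat)) \<and> (\<forall>i\<in>{..<k}. 1 \<le> d i) \<and> sum d {..<k} = s}
     = (s - k + k - 1) choose (s - k)"
proof -
  define D where "D = {d. (\<forall>i. i \<notin> {..<k} \<longrightarrow> d i = (0::nat)) \<and> (\<forall>i\<in>{..<k}. 1 \<le> d i) \<and> sum d {..<k} = s}"
  define L where "L = {l. length l = k \<and> sum_list l = s - k}"
  define g where "g d = map (\<lambda>i. d i - 1) [0..<k]" for d :: "nat \<Rightarrow> nat"
  define h where "h l = (\<lambda>i. if i < k then l ! i + 1 else (0::nat))" for l :: "nat list"
  have sl: "sum_list (map f [0..<k]) = sum f {..<k}" for f :: "nat \<Rightarrow> nat"
  proof -
    have "sum f (set [0..<k]) = sum_list (map f [0..<k])" by (rule sum_set_upt_conv_sum_list_nat)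
    moreover have "set [0..<k] = {..<k}" by (auto simp: atLeast0LessThan)
    ultimately show ?thesis by simp
  qed
  have bij: "bij_betw g D L"
  proof (rule bij_betw_byWitness[where f' = h])
    show "\<forall>a\<in>D. h (g a) = a"
    proof
      fix d assume d: "d \<in> D"
      show "h (g d) = d"
      proof
        fix i show "h (g d) i = d i"
        proof (cases "i < k")
          case True
          have "1 \<le> d i" using d True unfolding D_def by auto
          then show ?thesis using True unfolding h_def g_def by simp
        next
          case False
          have "d i = 0" using d False unfolding D_def by auto
          then show ?thesis using False unfolding h_def by simp
        qed
      qed
    qed
    show "\<forall>l\<in>L. g (h l) = l"
    proof
      fix l assume l: "l \<in> L"
      then have lk: "length l = k" unfolding L_def by simp
      show "g (h l) = l"
        by (rule nth_equalityI) (simp_all add: g_def h_def lk)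
    qed
    show "g ` D \<subseteq> L"
    proof
      fix x assume "x \<in> g ` D"
      then obtain d where d: "d \<in> D" "x = g d" by blast
      have d1: "\<forall>i\<in>{..<k}. 1 \<le> d i" and sd: "sum d {..<k} = s" using d(1) unfolding D_def by auto
      have "sum (\<lambda>i. d i - 1) {..<k} + card {..<k} = sum d {..<k}"
        by (rule sum_minus_one) (use d1 in auto)
      then have "sum (\<lambda>i. d i - 1) {..<k} = s - k" using sd by simp
      then have "sum_list (g d) = s - k" unfolding g_def sl .
      then show "x \<in> L" unfolding L_def d(2) by (simp add: g_def)
    qed
    show "h ` L \<subseteq> D"
    proof
      fix x assume "x \<in> h ` L"
      then obtain l where l: "l \<in> L" "x = h l" by blast
      have lk: "length l = k" and sl2: "sum_list l = s - k" using l(1) unfolding L_def by auto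
      have "sum (h l) {..<k} = sum (\<lambda>i. l ! i + 1) {..<k}" unfolding h_def by (rule sum.cong) auto
      also have "\<dots> = sum (\<lambda>i. l ! i) {..<k} + sum (\<lambda>i. 1) {..<k}" by (rule sum.distrib)
      also have "\<dots> = sum (\<lambda>i. l ! i) {..<k} + k" by simp
      also have "sum (\<lambda>i. l ! i) {..<k} = sum_list l"
      proof -
        have "sum_list (map (\<lambda>i. l ! i) [0..<k]) = sum (\<lambda>i. l ! i) {..<k}" by (rule sl)
        moreover have "map (\<lambda>i. l ! i) [0..<k] = l" by (rule nth_equalityI) (simp_all add: lk)
        ultimately show ?thesis by simp
      qed
      finally have "sum (h l) {..<k} = s" using sl2 ks by simp
      moreover have "\<forall>i. i \<notin> {..<k} \<longrightarrow> h l i = 0" unfolding h_def by simp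
      moreover have "\<forall>i\<in>{..<k}. 1 \<le> h l i" unfolding h_def by simp
      ultimately show "x \<in> D" unfolding D_def l(2) by blast
    qed
  qed
  have "card D = card L" using bij by (rule bij_betw_same_card)
  also have "\<dots> = (s - k + k - 1) choose (s - k)" unfolding L_def by (rule card_length_sum_list)
  finally show ?thesis unfolding D_def .
qed

theorem theorem2p1:
  fixes n m :: nat
  assumes "n \<ge> 1" and "m \<ge> 1"
  shows "real (card (plane_labelled_bip_trees n m)) =
         (fact (n + m - 2))^2 / (fact (n - 1) * fact (m - 1))"
proof -
  let ?W = "{..<n}" and ?B = "{..<m}"
  define N where "N = n + m - 2"
  define Dw where "Dw = {d. (\<forall>i. i \<notin> {..<n} \<longrightarrow> d i = (0::nat)) \<and> (\<forall>i\<in>{..<n}. 1 \<le> d i) \<and> sum d {..<n} = n + m - 1}"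
  define De where "De = {e. (\<forall>i. i \<notin> {..<m} \<longrightarrow> e i = (0::nat)) \<and> (\<forall>i\<in>{..<m}. 1 \<le> e i) \<and> sum e {..<m} = n + m - 1}"
  define D where "D = Dw \<times> De"
  have cDw: "card Dw = N choose (m - 1)"
  proof -
    have "card Dw = (n + m - 1 - n + n - 1) choose (n + m - 1 - n)"
      unfolding Dw_def by (rule card_comp) (use assms in simp)
    moreover have "n + m - 1 - n = m - 1" "n + m - 1 - n + n - 1 = N" using assms unfolding N_def by simp_all
    ultimately show ?thesis by simp
  qed
  have cDe: "card De = N choose (n - 1)"
  proof -
    have "card De = (n + m - 1 - m + m - 1) choose (n + m - 1 - m)"
      unfolding De_def by (rule card_comp) (use assms in simp)
    moreover have "n + m - 1 - m = n - 1" "n + m - 1 - m + m - 1 = N" using assms unfolding N_def by simp_all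
    ultimately show ?thesis by simp
  qed
  have fDw: "finite Dw"
  proof (rule ccontr)
    assume "infinite Dw"
    then have "card Dw = 0" by simp
    moreover have "N choose (m - 1) > 0" using assms unfolding N_def by simp
    ultimately show False using cDw by simp
  qed
  have fDe: "finite De"
  proof (rule ccontr)
    assume "infinite De"
    then have "card De = 0" by simp
    moreover have "N choose (n - 1) > 0" using assms unfolding N_def by simp
    ultimately show False using cDe by simp
  qed
  have fD: "finite D" unfolding D_def using fDw fDe by simp
  have fW: "finite ?W" and fB: "finite ?B" by simp_all
  have "0 \<in> ?W" "0 \<in> ?B" using assms by simp_all
  then have Wne: "?W \<noteq> {}" and Bne: "?B \<noteq> {}" by blast+
  have cW: "card ?W = n" and cB: "card ?B = m" by simp_all
  have valD: "val ?W ?B (fst p) (snd p)" if p: "p \<in> D" for p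
    using p unfolding D_def Dw_def De_def val_def cW cB by auto
  have cardF: "card (Fib ?W ?B (fst p) (snd p)) = fact (n - 1) * fact (m - 1)" if p: "p \<in> D" for p
    using main[OF fW fB Wne Bne, of "fst p" "snd p"] valD[OF p] unfolding cnt_def cW cB by simp
  have PTU: "PT ?W ?B = (\<Union>p\<in>D. Fib ?W ?B (fst p) (snd p))"
  proof
    show "(\<Union>p\<in>D. Fib ?W ?B (fst p) (snd p)) \<subseteq> PT ?W ?B" unfolding Fib_def by blast
    show "PT ?W ?B \<subseteq> (\<Union>p\<in>D. Fib ?W ?B (fst p) (snd p))"
    proof
      fix T assume T: "T \<in> PT ?W ?B"
      obtain E rw rb where Td: "T = (E, rw, rb)" using prod_cases3 by blast
      define d0 where "d0 = (\<lambda>i. card (NW E i))"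
      define e0 where "e0 = (\<lambda>j. card (NB E j))"
      have TF: "T \<in> Fib ?W ?B d0 e0" using T unfolding Td Fib_mem d0_def e0_def by simp
      have "card (Fib ?W ?B d0 e0) \<noteq> 0"
      proof
        assume "card (Fib ?W ?B d0 e0) = 0"
        then have "Fib ?W ?B d0 e0 = {}" using finite_Fib[OF fW fB] by simp
        then show False using TF by simp
      qed
      then have "cnt ?W ?B d0 e0 \<noteq> 0" using main[OF fW fB Wne Bne] by simp
      then have v: "val ?W ?B d0 e0" unfolding cnt_def by presburger
      have sub: "E \<subseteq> ?W \<times> ?B" using T unfolding Td PT_mem btree_def by blast
      have d0o: "\<forall>i. i \<notin> ?W \<longrightarrow> d0 i = 0"
      proof (intro allI impI)
        fix i assume "i \<notin> ?W"
        then have "NW E i = {}" using sub unfolding NW_def by blast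
        then show "d0 i = 0" unfolding d0_def by simp
      qed
      have e0o: "\<forall>j. j \<notin> ?B \<longrightarrow> e0 j = 0"
      proof (intro allI impI)
        fix j assume "j \<notin> ?B"
        then have "NB E j = {}" using sub unfolding NB_def by blast
        then show "e0 j = 0" unfolding e0_def by simp
      qed
      have "d0 \<in> Dw" using v d0o unfolding Dw_def val_def cW cB by blast
      moreover have "e0 \<in> De" using v e0o unfolding De_def val_def cW cB by blast
      ultimately have "(d0, e0) \<in> D" unfolding D_def by blast
      then show "T \<in> (\<Union>p\<in>D. Fib ?W ?B (fst p) (snd p))" using TF by force
    qed
  qed
  have disj: "\<forall>p\<in>D. \<forall>q\<in>D. p \<noteq> q \<longrightarrow> Fib ?W ?B (fst p) (snd p) \<inter> Fib ?W ?B (fst q) (snd q) = {}"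
  proof (intro ballI impI)
    fix p q assume p: "p \<in> D" and q: "q \<in> D" and pq: "p \<noteq> q"
    show "Fib ?W ?B (fst p) (snd p) \<inter> Fib ?W ?B (fst q) (snd q) = {}"
    proof (rule ccontr)
      assume "Fib ?W ?B (fst p) (snd p) \<inter> Fib ?W ?B (fst q) (snd q) \<noteq> {}"
      then obtain T where T1: "T \<in> Fib ?W ?B (fst p) (snd p)" and T2: "T \<in> Fib ?W ?B (fst q) (snd q)" by blast
      have a1: "\<forall>i\<in>?W. card (NW (fst T) i) = fst p i" "\<forall>j\<in>?B. card (NB (fst T) j) = snd p j"
        using T1 unfolding Fib_def by auto
      have a2: "\<forall>i\<in>?W. card (NW (fst T) i) = fst q i" "\<forall>j\<in>?B. card (NB (fst T) j) = snd q j"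
        using T2 unfolding Fib_def by auto
      have o: "\<forall>i. i \<notin> ?W \<longrightarrow> fst p i = 0" "\<forall>i. i \<notin> ?W \<longrightarrow> fst q i = 0"
        "\<forall>j. j \<notin> ?B \<longrightarrow> snd p j = 0" "\<forall>j. j \<notin> ?B \<longrightarrow> snd q j = 0"
        using p q unfolding D_def Dw_def De_def by auto
      have "fst p = fst q"
      proof
        fix i show "fst p i = fst q i"
        proof (cases "i \<in> ?W")
          case True then show ?thesis using a1(1) a2(1) by metis
        next
          case False then show ?thesis using o(1) o(2) by metis
        qed
      qed
      moreover have "snd p = snd q"
      proof
        fix j show "snd p j = snd q j"
        proof (cases "j \<in> ?B")
          case True then show ?thesis using a1(2) a2(2) by metis
        next
          case False then show ?thesis using o(3) o(4) by metis
        qed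
      qed
      ultimately show False using pq by (simp add: prod_eq_iff)
    qed
  qed
  have "card (PT ?W ?B) = (\<Sum>p\<in>D. card (Fib ?W ?B (fst p) (snd p)))"
    unfolding PTU by (rule card_UN_disjoint[OF fD _ disj]) (use finite_Fib[OF fW fB] in blast)
  also have "\<dots> = (\<Sum>p\<in>D. fact (n - 1) * fact (m - 1))" by (rule sum.cong[OF refl]) (rule cardF)
  also have "\<dots> = card D * (fact (n - 1) * fact (m - 1))" by simp
  finally have cPT: "card (PT ?W ?B) = (N choose (m - 1)) * (N choose (n - 1)) * (fact (n - 1) * fact (m - 1))"
    unfolding D_def card_cartesian_product cDw cDe .
  have b1: "fact (m - 1) * fact (N - (m - 1)) * (N choose (m - 1)) = (fact N :: nat)"
    by (rule binomial_fact_lemma) (use assms in \<open>simp add: N_def\<close>)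
  have b2: "fact (n - 1) * fact (N - (n - 1)) * (N choose (n - 1)) = (fact N :: nat)"
    by (rule binomial_fact_lemma) (use assms in \<open>simp add: N_def\<close>)
  have n1: "N - (m - 1) = n - 1" and n2: "N - (n - 1) = m - 1" using assms unfolding N_def by simp_all
  have key: "card (PT ?W ?B) * (fact (n - 1) * fact (m - 1)) = (fact N :: nat)^2"
  proof -
    have "card (PT ?W ?B) * (fact (n - 1) * fact (m - 1)) =
        (fact (m - 1) * fact (n - 1) * (N choose (m - 1))) * (fact (n - 1) * fact (m - 1) * (N choose (n - 1)))"
      unfolding cPT by (simp add: algebra_simps)
    also have "\<dots> = fact N * fact N" using b1 b2 unfolding n1 n2 by simp
    finally show ?thesis by (simp add: power2_eq_square)
  qed
  have keyr: "real (card (PT ?W ?B)) * (fact (n - 1) * fact (m - 1)) = (fact N)^2"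
  proof -
    have "real (card (PT ?W ?B) * (fact (n - 1) * fact (m - 1))) = real ((fact N)^2)" using key by simp
    then show ?thesis by (simp only: of_nat_mult of_nat_fact of_nat_power)
  qed
  have pos: "(fact (n - 1) * fact (m - 1) :: real) \<noteq> 0" by simp
  have "real (card (PT ?W ?B)) = (fact N)^2 / (fact (n - 1) * fact (m - 1))"
    using keyr pos by (simp add: eq_divide_eq)
  then show ?thesis unfolding PT_eq N_def .
qed


end
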